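(* Let $N\ge2$, $M=S^{N-1}\times S^{N-1}\times S^{N-1}$ with the product of Euclidean measures, and $h_\lambda(x,y,z)=|\langle y,z\rangle|^{\lambda_1}|\langle z,x\rangle|^{\lambda_2}|\langle x,y\rangle|^{\lambda_3}$ for $\lambda\in\mathbb{C}^3$. Then $\int_Mh_\lambda(x,y,z)\,d\sigma(x)d\sigma(y)d\sigma(z)$ converges absolutely if and only if $\operatorname{Re}\lambda_j>-1$ for $j=1,2,3$. *)

theory Defs
  imports "HOL-Analysis.Analysis"
begin

text \<open>Euclidean surface measure on the unit sphere S^{N-1} of R^N (N = CARD('n)),
  defined via the cone construction: sigma(A) = N * lebesgue({t x. x in A, 0 < t < 1}).\<close>

definition sphere_measure :: "(real ^ 'n) measure" where
  "sphere_measure =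
     density
       (distr (restrict_space lborel (ball 0 1 - {0}))
              (restrict_space borel (sphere 0 1))
              (\<lambda>y. (1 / norm y) *\<^sub>R y))
       (\<lambda>_. ennreal (real CARD('n)))"

text \<open>The kernel h_lambda(x,y,z) = |<y,z>|^l1 |<z,x>|^l2 |<x,y>|^l3 (complex powers;
  the value at a vanishing inner product is 0 by the convention 0 powr s = 0, a null set).\<close>

definition h_lambda :: "complex \<Rightarrow> complex \<Rightarrow> complex \<Rightarrow> real ^ 'n \<Rightarrow> real ^ 'n \<Rightarrow> real ^ 'n \<Rightarrow> complex" where
  "h_lambda l1 l2 l3 x y z =
     (complex_of_real \<bar>y \<bullet> z\<bar>) powr l1 *
     (complex_of_real \<bar>z \<bullet> x\<bar>) powr l2 *
     (complex_of_real \<bar>x \<bullet> y\<bar>) powr l3"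

end

theory Submission
  imports Defs
begin

lemma nn_pow_half_fin:
  fixes a r :: real assumes a: "a > -1" and r: "r \<ge> 0"
  shows "(\<integral>\<^sup>+t. indicator {0..r} t * ennreal (\<bar>t\<bar> powr a) \<partial>lborel) < \<infinity>"
proof -
  have "(\<integral>\<^sup>+t. indicator {0..r} t * ennreal (\<bar>t\<bar> powr a) \<partial>lborel)
      = (\<integral>\<^sup>+t. ennreal (t powr a) * indicator {0..r} t \<partial>lborel)"
    by (intro nn_integral_cong) (auto simp: indicator_def)
  also have "\<dots> = ennreal (r powr (a+1) / (a+1))"
    by (rule nn_integral_has_integral_lebesgue'[OF _ has_integral_powr_from_0[OF a r]]) auto
  finally show ?thesis by simp
qed

lemma nn_pow_fin:
  fixes a r :: real assumes a: "a > -1" and r: "r \<ge> 0"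
  shows "(\<integral>\<^sup>+t. indicator {-r..r} t * ennreal (\<bar>t\<bar> powr a) \<partial>lborel) < \<infinity>"
proof -
  have "(\<integral>\<^sup>+t. indicator {-r..r} t * ennreal (\<bar>t\<bar> powr a) \<partial>lborel)
     \<le> (\<integral>\<^sup>+t. indicator {0..r} t * ennreal (\<bar>t\<bar> powr a) + indicator {-r..0} t * ennreal (\<bar>t\<bar> powr a) \<partial>lborel)"
    by (intro nn_integral_mono) (auto simp: indicator_def)
  also have "\<dots> = (\<integral>\<^sup>+t. indicator {0..r} t * ennreal (\<bar>t\<bar> powr a) \<partial>lborel) + (\<integral>\<^sup>+t. indicator {-r..0} t * ennreal (\<bar>t\<bar> powr a) \<partial>lborel)"
    by (rule nn_integral_add) auto
  also have "(\<integral>\<^sup>+t. indicator {-r..0} t * ennreal (\<bar>t\<bar> powr a) \<partial>lborel) = ennreal \<bar>-1::real\<bar> * (\<integral>\<^sup>+t. indicator {-r..0} (0 + -1 * t) * ennreal (\<bar>0 + -1*t\<bar> powr a) \<partial>lborel)"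
    by (rule nn_integral_real_affine) auto
  also have "\<dots> = (\<integral>\<^sup>+t. indicator {0..r} t * ennreal (\<bar>t\<bar> powr a) \<partial>lborel)"
    by (simp, intro nn_integral_cong) (auto simp: indicator_def)
  finally show ?thesis using nn_pow_half_fin[OF a r]
    by (simp add: order_le_less_trans ennreal_add_eq_top top.not_eq_extremum)
qed

lemma nn_shift_bound:
  fixes a R :: real assumes a: "a > -1" "a \<le> 0" and R: "R \<ge> 1"
  obtains K where "K < \<infinity>" "\<And>t0. (\<integral>\<^sup>+t. indicator {-R..R} t * ennreal (\<bar>t - t0\<bar> powr a) \<partial>lborel) \<le> K"
proof -
  define K where "K = (\<integral>\<^sup>+t. indicator {-(3*R)..3*R} t * ennreal (\<bar>t\<bar> powr a) \<partial>lborel) + ennreal (2*R)"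
  have "K < \<infinity>" unfolding K_def using nn_pow_fin[OF a(1), of "3*R"] R by (simp add: ennreal_add_eq_top less_top)
  moreover have "(\<integral>\<^sup>+t. indicator {-R..R} t * ennreal (\<bar>t - t0\<bar> powr a) \<partial>lborel) \<le> K" for t0
  proof (cases "\<bar>t0\<bar> \<le> 2*R")
    case True
    have "(\<integral>\<^sup>+t. indicator {-R..R} t * ennreal (\<bar>t - t0\<bar> powr a) \<partial>lborel)
       \<le> (\<integral>\<^sup>+t. indicator {t0-3*R..t0+3*R} t * ennreal (\<bar>t - t0\<bar> powr a) \<partial>lborel)"
      using True by (intro nn_integral_mono) (auto simp: indicator_def)
    also have "\<dots> = ennreal \<bar>1::real\<bar> * (\<integral>\<^sup>+t. indicator {t0-3*R..t0+3*R} (t0 + 1 * t) * ennreal (\<bar>(t0 + 1*t) - t0\<bar> powr a) \<partial>lborel)"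
      by (rule nn_integral_real_affine) auto
    also have "\<dots> = (\<integral>\<^sup>+t. indicator {-(3*R)..3*R} t * ennreal (\<bar>t\<bar> powr a) \<partial>lborel)"
      by (simp, intro nn_integral_cong) (auto simp: indicator_def)
    also have "\<dots> \<le> K" unfolding K_def by simp
    finally show ?thesis .
  next
    case False
    have "(\<integral>\<^sup>+t. indicator {-R..R} t * ennreal (\<bar>t - t0\<bar> powr a) \<partial>lborel)
       \<le> (\<integral>\<^sup>+t. indicator {-R..R::real} t \<partial>lborel)"
    proof (rule nn_integral_mono)
      fix t show "indicator {-R..R} t * ennreal (\<bar>t - t0\<bar> powr a) \<le> indicator {-R..R} t"
      proof (cases "t \<in> {-R..R}")
        case True
        then have "\<bar>t - t0\<bar> \<ge> 1" using False R by auto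
        then have "\<bar>t - t0\<bar> powr a \<le> 1" using a by (simp add: powr_le_one_le ge_one_powr_ge_zero powr_mono2'
             order_trans[OF powr_mono[of a 0]] )
        then show ?thesis using True by (simp add: indicator_def)
      qed (auto simp: indicator_def)
    qed
    also have "\<dots> = ennreal (2*R)" using R by simp
    also have "\<dots> \<le> K" unfolding K_def by simp
    finally show ?thesis .
  qed
  ultimately show ?thesis using that by blast
qed

lemma nn_scaled_bound:
  fixes a s q :: real assumes s: "s \<noteq> 0"
    and K: "\<And>t0. (\<integral>\<^sup>+t. indicator {-R..R} t * ennreal (\<bar>t - t0\<bar> powr a) \<partial>lborel) \<le> K"
  shows "(\<integral>\<^sup>+t. indicator {-R..R} t * ennreal (\<bar>q + t * s\<bar> powr a) \<partial>lborel) \<le> ennreal (\<bar>s\<bar> powr a) * K"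
proof -
  have eq: "\<bar>q + t * s\<bar> powr a = \<bar>s\<bar> powr a * \<bar>t - (- q / s)\<bar> powr a" for t
  proof -
    have "\<bar>q + t * s\<bar> = \<bar>s\<bar> * \<bar>t - (- q / s)\<bar>"
      using s by (simp add: abs_mult[symmetric] algebra_simps)
    then show ?thesis by (simp add: powr_mult)
  qed
  have "(\<integral>\<^sup>+t. indicator {-R..R} t * ennreal (\<bar>q + t * s\<bar> powr a) \<partial>lborel)
      = (\<integral>\<^sup>+t. ennreal (\<bar>s\<bar> powr a) * (indicator {-R..R} t * ennreal (\<bar>t - (- q / s)\<bar> powr a)) \<partial>lborel)"
    by (intro nn_integral_cong) (simp add: eq ennreal_mult' mult_ac)
  also have "\<dots> = ennreal (\<bar>s\<bar> powr a) * (\<integral>\<^sup>+t. indicator {-R..R} t * ennreal (\<bar>t - (- q / s)\<bar> powr a) \<partial>lborel)"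
    by (rule nn_integral_cmult) simp
  also have "\<dots> \<le> ennreal (\<bar>s\<bar> powr a) * K"
    by (intro mult_left_mono K) simp
  finally show ?thesis .
qed

lemma nn_scaled_bound_if:
  fixes a s q R :: real assumes s: "s \<noteq> 0"
    and K: "\<And>t0. (\<integral>\<^sup>+t. indicator {-R..R} t * ennreal (\<bar>t - t0\<bar> powr a) \<partial>lborel) \<le> K"
  shows "(\<integral>\<^sup>+t. indicator {-R..R} t * (if q + t * s = 0 then \<infinity> else ennreal (\<bar>q + t * s\<bar> powr a)) \<partial>lborel) \<le> ennreal (\<bar>s\<bar> powr a) * K"
proof -
  have "AE t in lborel. t \<noteq> - q / s" by (rule AE_lborel_singleton)
  then have "AE t in lborel. indicator {-R..R} t * (if q + t * s = 0 then \<infinity> else ennreal (\<bar>q + t * s\<bar> powr a))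
      = indicator {-R..R} t * ennreal (\<bar>q + t * s\<bar> powr a)"
    by eventually_elim (use s in \<open>auto simp: field_simps\<close>)
  then have "(\<integral>\<^sup>+t. indicator {-R..R} t * (if q + t * s = 0 then \<infinity> else ennreal (\<bar>q + t * s\<bar> powr a)) \<partial>lborel)
     = (\<integral>\<^sup>+t. indicator {-R..R} t * ennreal (\<bar>q + t * s\<bar> powr a) \<partial>lborel)"
    by (rule nn_integral_cong_AE)
  then show ?thesis using nn_scaled_bound[OF s K] by simp
qed

lemma nn_inv_diverge:
  fixes e :: real assumes e: "e > 0"
  shows "(\<integral>\<^sup>+t. indicator {0<..e} t * ennreal (1 / t) \<partial>lborel) = \<infinity>"
proof -
  have ge: "ennreal M \<le> (\<integral>\<^sup>+t. indicator {0<..e} t * ennreal (1 / t) \<partial>lborel)" if M: "M \<ge> 0" for M :: real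
  proof -
    define h where "h = e * exp (- M)"
    have h: "0 < h" "h \<le> e" using e M by (auto simp: h_def mult_le_cancel_left1)
    have HI: "((\<lambda>t. 1 / t) has_integral (ln e - ln h)) {h..e}"
    proof (rule fundamental_theorem_of_calculus)
      show "h \<le> e" by fact
      fix x assume x: "x \<in> {h..e}"
      then have "x > 0" using h by auto
      then show "(ln has_vector_derivative 1 / x) (at x within {h..e})"
        by (auto intro!: derivative_eq_intros simp: has_real_derivative_iff_has_vector_derivative[symmetric])
    qed
    have I0: "(\<integral>\<^sup>+t. ennreal (1/t) * indicator {h..e} t \<partial>lborel) = ennreal (ln e - ln h)"
    proof (rule nn_integral_has_integral_lebesgue'[OF _ HI])
      fix x assume "x \<in> {h..e}" then show "0 \<le> 1 / x" using h by simp
    qed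
    have LM: "ln e - ln h = M" using e M by (simp add: h_def ln_mult)
    have mono: "(\<integral>\<^sup>+t. ennreal (1/t) * indicator {h..e} t \<partial>lborel) \<le> (\<integral>\<^sup>+t. indicator {0<..e} t * ennreal (1 / t) \<partial>lborel)"
      using h by (intro nn_integral_mono) (auto simp: indicator_def)
    show ?thesis using mono unfolding I0 LM .
  qed
  show ?thesis
  proof (rule ccontr)
    assume "(\<integral>\<^sup>+t. indicator {0<..e} t * ennreal (1 / t) \<partial>lborel) \<noteq> \<infinity>"
    then obtain r where r: "(\<integral>\<^sup>+t. indicator {0<..e} t * ennreal (1 / t) \<partial>lborel) = ennreal r" "r \<ge> 0"
      by (cases "(\<integral>\<^sup>+t. indicator {0<..e} t * ennreal (1 / t) \<partial>lborel)") auto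
    have "ennreal (r + 1) \<le> ennreal r" using ge[of "r+1"] r(2) unfolding r(1) by linarith
    then have "r + 1 \<le> r" using r(2) ennreal_le_iff by blast
    then show False by linarith
  qed
qed

lemma nn_pow_diverge:
  fixes a d t0 :: real assumes a: "a \<le> -1" and d: "d > 0"
  shows "(\<integral>\<^sup>+t. indicator {t0-d..t0+d} t * ennreal (\<bar>t - t0\<bar> powr a) \<partial>lborel) = \<infinity>"
proof -
  define e where "e = min d 1"
  have e: "e > 0" "e \<le> d" "e \<le> 1" using d by (auto simp: e_def)
  have "\<infinity> = (\<integral>\<^sup>+t. indicator {0<..e} t * ennreal (1 / t) \<partial>lborel)" using nn_inv_diverge[OF e(1)] by simp
  also have "\<dots> \<le> (\<integral>\<^sup>+t. indicator {-d..d} t * ennreal (\<bar>t\<bar> powr a) \<partial>lborel)"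
  proof (rule nn_integral_mono)
    fix t show "indicator {0<..e} t * ennreal (1 / t) \<le> indicator {-d..d} t * ennreal (\<bar>t\<bar> powr a)"
    proof (cases "t \<in> {0<..e}")
      case True
      then have t: "0 < t" "t \<le> 1" "t \<le> d" using e by auto
      have "1 / t = t powr (-1)" using t by (simp add: powr_minus_divide)
      also have "\<dots> \<le> t powr a" using t a by (intro powr_mono') auto
      finally show ?thesis using True t d by (auto simp: indicator_def intro!: ennreal_leI)
    qed (auto simp: indicator_def)
  qed
  also have "\<dots> = ennreal \<bar>1::real\<bar> * (\<integral>\<^sup>+t. indicator {-d..d} (-t0 + 1 * t) * ennreal (\<bar>-t0 + 1 * t\<bar> powr a) \<partial>lborel)"
    by (rule nn_integral_real_affine) auto
  also have "\<dots> = (\<integral>\<^sup>+t. indicator {t0-d..t0+d} t * ennreal (\<bar>t - t0\<bar> powr a) \<partial>lborel)"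
    by (simp, intro nn_integral_cong) (auto simp: indicator_def)
  finally show ?thesis by (simp add: top_unique)
qed

lemma nn_integral_peel:
  fixes f :: "'a::euclidean_space \<Rightarrow> ennreal" and b :: 'a
  assumes b: "b \<in> Basis" and f[measurable]: "f \<in> borel_measurable borel"
  shows "(\<integral>\<^sup>+x. f x \<partial>lborel) =
    (\<integral>\<^sup>+\<omega>. (\<integral>\<^sup>+t. f (t *\<^sub>R b + (\<Sum>c\<in>Basis-{b}. \<omega> c *\<^sub>R c)) \<partial>lborel) \<partial>(Pi\<^sub>M (Basis-{b}) (\<lambda>_. lborel)))"
proof -
  interpret product_sigma_finite "\<lambda>_::'a. lborel :: real measure"
    by standard
  have ins: "Basis = insert b (Basis - {b})" using b by auto
  have "(\<integral>\<^sup>+x. f x \<partial>lborel) = (\<integral>\<^sup>+\<omega>. f (\<Sum>c\<in>Basis. \<omega> c *\<^sub>R c) \<partial>(Pi\<^sub>M Basis (\<lambda>_. lborel)))"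
    by (subst lborel_eq) (simp add: nn_integral_distr)
  also have "\<dots> = (\<integral>\<^sup>+\<omega>. f (\<Sum>c\<in>Basis. \<omega> c *\<^sub>R c) \<partial>(Pi\<^sub>M (insert b (Basis - {b})) (\<lambda>_. lborel)))"
    using ins by simp
  also have "\<dots> = (\<integral>\<^sup>+\<omega>. (\<integral>\<^sup>+t. f (\<Sum>c\<in>Basis. fun_upd \<omega> b t c *\<^sub>R c) \<partial>lborel) \<partial>(Pi\<^sub>M (Basis-{b}) (\<lambda>_. lborel)))"
    by (rule product_nn_integral_insert) (use ins in \<open>auto\<close>)
  also have "\<dots> = (\<integral>\<^sup>+\<omega>. (\<integral>\<^sup>+t. f (t *\<^sub>R b + (\<Sum>c\<in>Basis-{b}. \<omega> c *\<^sub>R c)) \<partial>lborel) \<partial>(Pi\<^sub>M (Basis-{b}) (\<lambda>_. lborel)))"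
  proof -
    have "(\<Sum>c\<in>Basis. fun_upd \<omega> b t c *\<^sub>R c) = t *\<^sub>R b + (\<Sum>c\<in>Basis-{b}. \<omega> c *\<^sub>R c)" for \<omega> t
      by (subst sum.remove[OF finite_Basis b]) (auto intro!: sum.cong)
    then show ?thesis by simp
  qed
  finally show ?thesis .
qed

lemma peel_inner:
  fixes b c :: "'a::euclidean_space"
  assumes "b \<in> Basis" "c \<in> Basis" "c \<noteq> b"
  shows "(t *\<^sub>R b + (\<Sum>d\<in>Basis-{b}. \<omega> d *\<^sub>R d)) \<bullet> c = \<omega> c"
  using assms by (auto simp: inner_add_left inner_sum_left inner_Basis if_distrib sum.delta cong: if_cong)

lemma peel_inner2:
  fixes b :: "'a::euclidean_space"
  assumes "b \<in> Basis"
  shows "(t *\<^sub>R b + (\<Sum>d\<in>Basis-{b}. \<omega> d *\<^sub>R d)) \<bullet> b = t"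
  using assms by (auto simp: inner_add_left inner_sum_left inner_Basis if_distrib sum.delta cong: if_cong)

definition phi :: "'a::euclidean_space \<Rightarrow> 'a \<Rightarrow> 'a \<Rightarrow> 'a" where
  "phi x j z = z + ((z \<bullet> j - x \<bullet> z) / (x \<bullet> j)) *\<^sub>R j"

lemma phi_measurable[measurable]: "phi x j \<in> borel_measurable borel"
  unfolding phi_def by measurable

lemma phi_peel:
  fixes j :: "'a::euclidean_space"
  assumes j: "j \<in> Basis" and xj: "x \<bullet> j \<noteq> 0"
  shows "phi x j (t *\<^sub>R j + (\<Sum>c\<in>Basis-{j}. \<omega> c *\<^sub>R c))
       = ((t - x \<bullet> (\<Sum>c\<in>Basis-{j}. \<omega> c *\<^sub>R c)) / (x \<bullet> j)) *\<^sub>R j + (\<Sum>c\<in>Basis-{j}. \<omega> c *\<^sub>R c)"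
proof -
  define S where "S = (\<Sum>c\<in>Basis-{j}. \<omega> c *\<^sub>R c)"
  have zj: "(t *\<^sub>R j + S) \<bullet> j = t" unfolding S_def using peel_inner2[OF j] .
  have xz: "x \<bullet> (t *\<^sub>R j + S) = t * (x \<bullet> j) + x \<bullet> S" by (simp add: inner_add_right)
  have "phi x j (t *\<^sub>R j + S) = (t + (t - (t * (x \<bullet> j) + x \<bullet> S)) / (x \<bullet> j)) *\<^sub>R j + S"
    unfolding phi_def zj xz by (simp add: scaleR_add_left)
  also have "t + (t - (t * (x \<bullet> j) + x \<bullet> S)) / (x \<bullet> j) = (t - x \<bullet> S) / (x \<bullet> j)"
    using xj by (simp add: field_simps)
  finally show ?thesis unfolding S_def .
qed

lemma nn_integral_phi:
  fixes g :: "'a::euclidean_space \<Rightarrow> ennreal"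
  assumes j: "j \<in> Basis" and xj: "x \<bullet> j \<noteq> 0" and g[measurable]: "g \<in> borel_measurable borel"
  shows "(\<integral>\<^sup>+z. g (phi x j z) \<partial>lborel) = ennreal \<bar>x \<bullet> j\<bar> * (\<integral>\<^sup>+z. g z \<partial>lborel)"
proof -
  define S where "S \<omega> = (\<Sum>c\<in>Basis-{j}. \<omega> c *\<^sub>R c)" for \<omega> :: "'a \<Rightarrow> real"
  have [measurable]: "S \<in> borel_measurable (Pi\<^sub>M (Basis-{j}) (\<lambda>_. lborel))"
    unfolding S_def by measurable
  have "(\<integral>\<^sup>+z. g (phi x j z) \<partial>lborel) =
     (\<integral>\<^sup>+\<omega>. (\<integral>\<^sup>+t. g (phi x j (t *\<^sub>R j + S \<omega>)) \<partial>lborel) \<partial>(Pi\<^sub>M (Basis-{j}) (\<lambda>_. lborel)))"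
    unfolding S_def by (rule nn_integral_peel[OF j]) measurable
  also have "\<dots> = (\<integral>\<^sup>+\<omega>. ennreal \<bar>x \<bullet> j\<bar> * (\<integral>\<^sup>+t. g (t *\<^sub>R j + S \<omega>) \<partial>lborel) \<partial>(Pi\<^sub>M (Basis-{j}) (\<lambda>_. lborel)))"
  proof (rule nn_integral_cong)
    fix \<omega> :: "'a \<Rightarrow> real"
    define q where "q = x \<bullet> S \<omega>"
    have "(\<integral>\<^sup>+t. g (t *\<^sub>R j + S \<omega>) \<partial>lborel)
        = ennreal \<bar>1 / (x \<bullet> j)\<bar> * (\<integral>\<^sup>+t. g ((- q / (x \<bullet> j) + (1 / (x \<bullet> j)) * t) *\<^sub>R j + S \<omega>) \<partial>lborel)"
      by (rule nn_integral_real_affine) (use xj in auto)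
    also have "(\<lambda>t. g ((- q / (x \<bullet> j) + (1 / (x \<bullet> j)) * t) *\<^sub>R j + S \<omega>)) = (\<lambda>t. g (phi x j (t *\<^sub>R j + S \<omega>)))"
    proof -
      have sc: "\<And>t. - q / (x \<bullet> j) + (1 / (x \<bullet> j)) * t = (t - q) / (x \<bullet> j)" using xj by (simp add: field_simps)
      show ?thesis unfolding sc using phi_peel[OF j xj] by (simp add: S_def q_def)
    qed
    finally have "(\<integral>\<^sup>+t. g (t *\<^sub>R j + S \<omega>) \<partial>lborel) = ennreal (1 / \<bar>x \<bullet> j\<bar>) * (\<integral>\<^sup>+t. g (phi x j (t *\<^sub>R j + S \<omega>)) \<partial>lborel)"
      by simp
    then have "ennreal \<bar>x \<bullet> j\<bar> * (\<integral>\<^sup>+t. g (t *\<^sub>R j + S \<omega>) \<partial>lborel)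
       = (ennreal \<bar>x \<bullet> j\<bar> * ennreal (1 / \<bar>x \<bullet> j\<bar>)) * (\<integral>\<^sup>+t. g (phi x j (t *\<^sub>R j + S \<omega>)) \<partial>lborel)"
      by (simp add: mult.assoc)
    also have "ennreal \<bar>x \<bullet> j\<bar> * ennreal (1 / \<bar>x \<bullet> j\<bar>) = 1"
      using xj by (simp add: ennreal_mult'[symmetric])
    finally show "(\<integral>\<^sup>+t. g (phi x j (t *\<^sub>R j + S \<omega>)) \<partial>lborel) = ennreal \<bar>x \<bullet> j\<bar> * (\<integral>\<^sup>+t. g (t *\<^sub>R j + S \<omega>) \<partial>lborel)"
      by simp
  qed
  also have "\<dots> = ennreal \<bar>x \<bullet> j\<bar> * (\<integral>\<^sup>+\<omega>. (\<integral>\<^sup>+t. g (t *\<^sub>R j + S \<omega>) \<partial>lborel) \<partial>(Pi\<^sub>M (Basis-{j}) (\<lambda>_. lborel)))"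
    by (rule nn_integral_cmult) measurable
  also have "(\<integral>\<^sup>+\<omega>. (\<integral>\<^sup>+t. g (t *\<^sub>R j + S \<omega>) \<partial>lborel) \<partial>(Pi\<^sub>M (Basis-{j}) (\<lambda>_. lborel))) = (\<integral>\<^sup>+z. g z \<partial>lborel)"
    unfolding S_def by (rule nn_integral_peel[OF j, symmetric]) measurable
  finally show ?thesis .
qed

definition boxR :: "real \<Rightarrow> 'a::euclidean_space \<Rightarrow> ennreal" where
  "boxR R y = (\<Prod>i\<in>Basis. indicator {-R..R} (y \<bullet> i))"

lemma boxR_measurable[measurable]: "boxR R \<in> borel_measurable borel"
  unfolding boxR_def by measurable

lemma phi_add: "phi x j (u + v) = phi x j u + phi x j v"
  unfolding phi_def by (simp add: inner_add_left inner_add_right add_divide_distrib[symmetric] scaleR_add_left[symmetric] algebra_simps)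

lemma phi_scale: "phi x j (c *\<^sub>R u) = c *\<^sub>R phi x j u"
  unfolding phi_def by (simp add: algebra_simps scaleR_add_right)

lemma boxR_peel:
  fixes k :: "'a::euclidean_space"
  assumes k: "k \<in> Basis"
  shows "boxR R (t *\<^sub>R k + (\<Sum>c\<in>Basis-{k}. \<omega> c *\<^sub>R c)) = indicator {-R..R} t * (\<Prod>i\<in>Basis-{k}. indicator {-R..R} (\<omega> i))"
proof -
  have "(\<Prod>i\<in>Basis-{k}. indicator {-R..R} ((t *\<^sub>R k + (\<Sum>c\<in>Basis-{k}. \<omega> c *\<^sub>R c)) \<bullet> i)) = (\<Prod>i\<in>Basis-{k}. indicator {-R..R} (\<omega> i) :: ennreal)"
    using k by (intro prod.cong refl) (simp add: peel_inner)
  then show ?thesis unfolding boxR_def by (subst prod.remove[OF finite_Basis k]) (simp add: peel_inner2[OF k])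
qed

definition Aint :: "real \<Rightarrow> real \<Rightarrow> ennreal" where
  "Aint R b = (\<integral>\<^sup>+s. indicator {-R..R} s * ennreal (\<bar>s\<bar> powr b) \<partial>lborel) + ennreal (2 * R)"

lemma Aint_fin: "b > -1 \<Longrightarrow> R \<ge> 0 \<Longrightarrow> Aint R b < \<infinity>"
  unfolding Aint_def using nn_pow_fin[of b R] by (simp add: ennreal_add_eq_top less_top)

lemma prod_bound:
  fixes j k :: "'a::euclidean_space"
  assumes k: "k \<in> Basis" and jk: "j \<in> Basis - {k}" and R: "R \<ge> 0"
  shows "(\<integral>\<^sup>+\<omega>. (\<Prod>i\<in>Basis-{k}. indicator {-R..R} (\<omega> i)) * ennreal (\<bar>\<omega> j\<bar> powr b) \<partial>(Pi\<^sub>M (Basis-{k}) (\<lambda>_. lborel)))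
     \<le> Aint R b ^ (DIM('a) - 1)"
proof -
  interpret product_sigma_finite "\<lambda>_::'a. lborel :: real measure" by standard
  define f where "f i s = indicator {-R..R} s * (if i = j then ennreal (\<bar>s\<bar> powr b) else 1)" for i s
  have [measurable]: "f i \<in> borel_measurable borel" for i unfolding f_def by measurable
  have "(\<integral>\<^sup>+\<omega>. (\<Prod>i\<in>Basis-{k}. indicator {-R..R} (\<omega> i)) * ennreal (\<bar>\<omega> j\<bar> powr b) \<partial>(Pi\<^sub>M (Basis-{k}) (\<lambda>_. lborel)))
     = (\<integral>\<^sup>+\<omega>. (\<Prod>i\<in>Basis-{k}. f i (\<omega> i)) \<partial>(Pi\<^sub>M (Basis-{k}) (\<lambda>_. lborel)))"
  proof (rule nn_integral_cong)
    fix \<omega> :: "'a \<Rightarrow> real"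
    have "(\<Prod>i\<in>Basis-{k}. f i (\<omega> i)) = f j (\<omega> j) * (\<Prod>i\<in>Basis-{k}-{j}. f i (\<omega> i))"
      using jk by (subst prod.remove) auto
    also have "(\<Prod>i\<in>Basis-{k}-{j}. f i (\<omega> i)) = (\<Prod>i\<in>Basis-{k}-{j}. indicator {-R..R} (\<omega> i))"
      by (intro prod.cong) (auto simp: f_def)
    also have "(\<Prod>i\<in>Basis-{k}. indicator {-R..R} (\<omega> i)) = indicator {-R..R} (\<omega> j) * (\<Prod>i\<in>Basis-{k}-{j}. indicator {-R..R} (\<omega> i) :: ennreal)"
      using jk by (subst prod.remove) auto
    ultimately show "(\<Prod>i\<in>Basis-{k}. indicator {-R..R} (\<omega> i)) * ennreal (\<bar>\<omega> j\<bar> powr b) = (\<Prod>i\<in>Basis-{k}. f i (\<omega> i))"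
      by (simp add: f_def mult_ac)
  qed
  also have "\<dots> = (\<Prod>i\<in>Basis-{k}. (\<integral>\<^sup>+s. f i s \<partial>lborel))"
    by (rule product_nn_integral_prod) auto
  also have "\<dots> \<le> (\<Prod>i\<in>Basis-{k}. Aint R b)"
  proof (rule prod_mono_ennreal)
    fix i assume "i \<in> Basis - {k}"
    show "(\<integral>\<^sup>+s. f i s \<partial>lborel) \<le> Aint R b"
    proof (cases "i = j")
      case True
      then show ?thesis unfolding Aint_def f_def by simp
    next
      case False
      then have "(\<integral>\<^sup>+s. f i s \<partial>lborel) = ennreal (2 * R)" using R by (simp add: f_def)
      then show ?thesis unfolding Aint_def by simp
    qed
  qed
  also have "\<dots> = Aint R b ^ (DIM('a) - 1)"
    using k by (simp add: card_Diff_singleton)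
  finally show ?thesis .
qed

lemma phi_inner_j: "j \<in> Basis \<Longrightarrow> i \<in> Basis \<Longrightarrow> i \<noteq> j \<Longrightarrow> phi x j z \<bullet> i = z \<bullet> i"
  unfolding phi_def by (simp add: inner_add_left inner_Basis)

lemma x_phi: "x \<bullet> j \<noteq> 0 \<Longrightarrow> x \<bullet> phi x j z = z \<bullet> j"
  unfolding phi_def by (simp add: inner_add_right field_simps)

lemma z_inner:
  fixes x w j k :: "'a::euclidean_space"
  assumes j: "j \<in> Basis" and k: "k \<in> Basis" and kj: "k \<noteq> j" and R: "R \<ge> 0"
    and K: "\<And>t0. (\<integral>\<^sup>+t. indicator {-R..R} t * ennreal (\<bar>t - t0\<bar> powr a) \<partial>lborel) \<le> K"
  shows "(\<integral>\<^sup>+z. boxR R z * ennreal (\<bar>w \<bullet> phi x j z\<bar> powr a) * ennreal (\<bar>z \<bullet> j\<bar> powr b) \<partial>lborel)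
     \<le> Aint R b ^ (DIM('a) - 1) * (if w \<bullet> phi x j k = 0 then \<infinity> else ennreal (\<bar>w \<bullet> phi x j k\<bar> powr a) * K)"
proof -
  define S where "S \<omega> = (\<Sum>c\<in>Basis-{k}. \<omega> c *\<^sub>R c)" for \<omega> :: "'a \<Rightarrow> real"
  have [measurable]: "S \<in> borel_measurable (Pi\<^sub>M (Basis-{k}) (\<lambda>_. lborel))"
    unfolding S_def by measurable
  define l where "l = w \<bullet> phi x j k"
  define B where "B = (if l = 0 then \<infinity> else ennreal (\<bar>l\<bar> powr a) * K)"
  define F where "F \<omega> = (\<Prod>i\<in>Basis-{k}. indicator {-R..R} (\<omega> i)) * ennreal (\<bar>\<omega> j\<bar> powr b)" for \<omega> :: "'a \<Rightarrow> real"
  have [measurable]: "F \<in> borel_measurable (Pi\<^sub>M (Basis-{k}) (\<lambda>_. lborel))"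
  proof -
    have jk: "j \<in> Basis - {k}" using j kj by auto
    have m1: "(\<lambda>\<omega>::'a\<Rightarrow>real. \<omega> j) \<in> borel_measurable (Pi\<^sub>M (Basis-{k}) (\<lambda>_. lborel))"
      using measurable_component_singleton[OF jk, of "\<lambda>_. lborel"] by (simp cong: measurable_cong_sets)
    have m2: "(\<lambda>s::real. ennreal (\<bar>s\<bar> powr b)) \<in> borel_measurable borel" by measurable
    have [measurable]: "(\<lambda>\<omega>::'a\<Rightarrow>real. ennreal (\<bar>\<omega> j\<bar> powr b)) \<in> borel_measurable (Pi\<^sub>M (Basis-{k}) (\<lambda>_. lborel))"
      using measurable_compose[OF m1 m2] by simp
    show ?thesis unfolding F_def by measurable
  qed
  have "(\<integral>\<^sup>+z. boxR R z * ennreal (\<bar>w \<bullet> phi x j z\<bar> powr a) * ennreal (\<bar>z \<bullet> j\<bar> powr b) \<partial>lborel)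
     = (\<integral>\<^sup>+\<omega>. (\<integral>\<^sup>+t. boxR R (t *\<^sub>R k + S \<omega>) * ennreal (\<bar>w \<bullet> phi x j (t *\<^sub>R k + S \<omega>)\<bar> powr a)
            * ennreal (\<bar>(t *\<^sub>R k + S \<omega>) \<bullet> j\<bar> powr b) \<partial>lborel) \<partial>(Pi\<^sub>M (Basis-{k}) (\<lambda>_. lborel)))"
    unfolding S_def by (rule nn_integral_peel[OF k]) measurable
  also have "\<dots> = (\<integral>\<^sup>+\<omega>. F \<omega> * (\<integral>\<^sup>+t. indicator {-R..R} t * ennreal (\<bar>w \<bullet> phi x j (S \<omega>) + t * l\<bar> powr a) \<partial>lborel)
        \<partial>(Pi\<^sub>M (Basis-{k}) (\<lambda>_. lborel)))"
  proof (rule nn_integral_cong)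
    fix \<omega> :: "'a \<Rightarrow> real"
    have e1: "w \<bullet> phi x j (t *\<^sub>R k + S \<omega>) = w \<bullet> phi x j (S \<omega>) + t * l" for t
      by (simp add: phi_add phi_scale inner_add_right l_def)
    have e2: "(t *\<^sub>R k + S \<omega>) \<bullet> j = \<omega> j" for t
      unfolding S_def using peel_inner[OF k j] kj by auto
    have "(\<integral>\<^sup>+t. boxR R (t *\<^sub>R k + S \<omega>) * ennreal (\<bar>w \<bullet> phi x j (t *\<^sub>R k + S \<omega>)\<bar> powr a)
            * ennreal (\<bar>(t *\<^sub>R k + S \<omega>) \<bullet> j\<bar> powr b) \<partial>lborel)
       = (\<integral>\<^sup>+t. F \<omega> * (indicator {-R..R} t * ennreal (\<bar>w \<bullet> phi x j (S \<omega>) + t * l\<bar> powr a)) \<partial>lborel)"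
      unfolding S_def e1[unfolded S_def] e2[unfolded S_def] boxR_peel[OF k] F_def
      by (intro nn_integral_cong) (simp add: mult_ac)
    also have "\<dots> = F \<omega> * (\<integral>\<^sup>+t. indicator {-R..R} t * ennreal (\<bar>w \<bullet> phi x j (S \<omega>) + t * l\<bar> powr a) \<partial>lborel)"
      by (rule nn_integral_cmult) measurable
    finally show "(\<integral>\<^sup>+t. boxR R (t *\<^sub>R k + S \<omega>) * ennreal (\<bar>w \<bullet> phi x j (t *\<^sub>R k + S \<omega>)\<bar> powr a)
            * ennreal (\<bar>(t *\<^sub>R k + S \<omega>) \<bullet> j\<bar> powr b) \<partial>lborel) = F \<omega> * (\<integral>\<^sup>+t. indicator {-R..R} t * ennreal (\<bar>w \<bullet> phi x j (S \<omega>) + t * l\<bar> powr a) \<partial>lborel)" .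
  qed
  also have "\<dots> \<le> (\<integral>\<^sup>+\<omega>. F \<omega> * B \<partial>(Pi\<^sub>M (Basis-{k}) (\<lambda>_. lborel)))"
  proof (rule nn_integral_mono)
    fix \<omega> :: "'a \<Rightarrow> real"
    have "(\<integral>\<^sup>+t. indicator {-R..R} t * ennreal (\<bar>w \<bullet> phi x j (S \<omega>) + t * l\<bar> powr a) \<partial>lborel) \<le> B"
    proof (cases "l = 0")
      case True then show ?thesis by (simp add: B_def)
    next
      case False
      then show ?thesis unfolding B_def using nn_scaled_bound[OF False K] by (simp add: mult_ac)
    qed
    then show "F \<omega> * (\<integral>\<^sup>+t. indicator {-R..R} t * ennreal (\<bar>w \<bullet> phi x j (S \<omega>) + t * l\<bar> powr a) \<partial>lborel) \<le> F \<omega> * B"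
      by (rule mult_left_mono) simp
  qed
  also have "\<dots> = (\<integral>\<^sup>+\<omega>. F \<omega> \<partial>(Pi\<^sub>M (Basis-{k}) (\<lambda>_. lborel))) * B"
    by (rule nn_integral_multc) measurable
  also have "\<dots> \<le> Aint R b ^ (DIM('a) - 1) * B"
    unfolding F_def using prod_bound[OF k _ R, of j b] j kj by (intro mult_right_mono) auto
  finally show ?thesis unfolding B_def l_def .
qed

lemma powr_le1_aux: "1 \<le> (l::real) \<Longrightarrow> a \<le> 0 \<Longrightarrow> l powr a \<le> 1"
  using powr_mono[of a 0 l] by simp

lemma phik_sq:
  fixes x j k :: "'a::euclidean_space"
  assumes j: "j \<in> Basis" and k: "k \<in> Basis" and kj: "k \<noteq> j"
  shows "phi x j k \<bullet> phi x j k \<ge> 1"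
proof -
  define c where "c = (k \<bullet> j - x \<bullet> k) / (x \<bullet> j)"
  have "phi x j k = k + c *\<^sub>R j" unfolding phi_def c_def ..
  moreover have "(k + c *\<^sub>R j) \<bullet> (k + c *\<^sub>R j) = 1 + c * c"
    using j k kj by (simp add: inner_add_left inner_add_right inner_Basis)
  ultimately show ?thesis by simp
qed

lemma y_outer:
  fixes x j k :: "'a::euclidean_space"
  assumes j: "j \<in> Basis" and k: "k \<in> Basis" and kj: "k \<noteq> j" and R: "R \<ge> 0" and a: "a \<le> 0"
    and K: "\<And>t0. (\<integral>\<^sup>+t. indicator {-R..R} t * ennreal (\<bar>t - t0\<bar> powr a) \<partial>lborel) \<le> K"
  shows "(\<integral>\<^sup>+y. boxR R y * ennreal (\<bar>y \<bullet> j\<bar> powr c) *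
      (if phi x j y \<bullet> phi x j k = 0 then \<infinity> else ennreal (\<bar>phi x j y \<bullet> phi x j k\<bar> powr a)) \<partial>lborel)
     \<le> Aint R c ^ (DIM('a) - 1) * K"
proof -
  define S where "S \<omega> = (\<Sum>c\<in>Basis-{k}. \<omega> c *\<^sub>R c)" for \<omega> :: "'a \<Rightarrow> real"
  have [measurable]: "S \<in> borel_measurable (Pi\<^sub>M (Basis-{k}) (\<lambda>_. lborel))"
    unfolding S_def by measurable
  define l where "l = phi x j k \<bullet> phi x j k"
  have l1: "l \<ge> 1" unfolding l_def by (rule phik_sq[OF j k kj])
  define F where "F \<omega> = (\<Prod>i\<in>Basis-{k}. indicator {-R..R} (\<omega> i)) * ennreal (\<bar>\<omega> j\<bar> powr c)" for \<omega> :: "'a \<Rightarrow> real"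
  have [measurable]: "F \<in> borel_measurable (Pi\<^sub>M (Basis-{k}) (\<lambda>_. lborel))"
  proof -
    have jk: "j \<in> Basis - {k}" using j kj by auto
    have m1: "(\<lambda>\<omega>::'a\<Rightarrow>real. \<omega> j) \<in> borel_measurable (Pi\<^sub>M (Basis-{k}) (\<lambda>_. lborel))"
      using measurable_component_singleton[OF jk, of "\<lambda>_. lborel"] by (simp cong: measurable_cong_sets)
    have m2: "(\<lambda>s::real. ennreal (\<bar>s\<bar> powr c)) \<in> borel_measurable borel" by measurable
    have [measurable]: "(\<lambda>\<omega>::'a\<Rightarrow>real. ennreal (\<bar>\<omega> j\<bar> powr c)) \<in> borel_measurable (Pi\<^sub>M (Basis-{k}) (\<lambda>_. lborel))"
      using measurable_compose[OF m1 m2] by simp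
    show ?thesis unfolding F_def by measurable
  qed
  define G where "G y = (if y = 0 then \<infinity> else ennreal (\<bar>y\<bar> powr a))" for y :: real
  have [measurable]: "G \<in> borel_measurable borel" unfolding G_def by measurable
  have "(\<integral>\<^sup>+y. boxR R y * ennreal (\<bar>y \<bullet> j\<bar> powr c) * G (phi x j y \<bullet> phi x j k) \<partial>lborel)
     = (\<integral>\<^sup>+\<omega>. (\<integral>\<^sup>+t. boxR R (t *\<^sub>R k + S \<omega>) * ennreal (\<bar>(t *\<^sub>R k + S \<omega>) \<bullet> j\<bar> powr c)
            * G (phi x j (t *\<^sub>R k + S \<omega>) \<bullet> phi x j k) \<partial>lborel) \<partial>(Pi\<^sub>M (Basis-{k}) (\<lambda>_. lborel)))"
    unfolding S_def by (rule nn_integral_peel[OF k]) measurable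
  also have "\<dots> = (\<integral>\<^sup>+\<omega>. F \<omega> * (\<integral>\<^sup>+t. indicator {-R..R} t * G (phi x j (S \<omega>) \<bullet> phi x j k + t * l) \<partial>lborel)
        \<partial>(Pi\<^sub>M (Basis-{k}) (\<lambda>_. lborel)))"
  proof (rule nn_integral_cong)
    fix \<omega> :: "'a \<Rightarrow> real"
    have e1: "phi x j (t *\<^sub>R k + S \<omega>) \<bullet> phi x j k = phi x j (S \<omega>) \<bullet> phi x j k + t * l" for t
      by (simp add: phi_add phi_scale inner_add_left l_def)
    have e2: "(t *\<^sub>R k + S \<omega>) \<bullet> j = \<omega> j" for t
      unfolding S_def using peel_inner[OF k j] kj by auto
    have "(\<integral>\<^sup>+t. boxR R (t *\<^sub>R k + S \<omega>) * ennreal (\<bar>(t *\<^sub>R k + S \<omega>) \<bullet> j\<bar> powr c)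
            * G (phi x j (t *\<^sub>R k + S \<omega>) \<bullet> phi x j k) \<partial>lborel)
       = (\<integral>\<^sup>+t. F \<omega> * (indicator {-R..R} t * G (phi x j (S \<omega>) \<bullet> phi x j k + t * l)) \<partial>lborel)"
      unfolding S_def e1[unfolded S_def] e2[unfolded S_def] boxR_peel[OF k] F_def
      by (intro nn_integral_cong) (simp add: mult_ac)
    also have "\<dots> = F \<omega> * (\<integral>\<^sup>+t. indicator {-R..R} t * G (phi x j (S \<omega>) \<bullet> phi x j k + t * l) \<partial>lborel)"
      by (rule nn_integral_cmult) measurable
    finally show "(\<integral>\<^sup>+t. boxR R (t *\<^sub>R k + S \<omega>) * ennreal (\<bar>(t *\<^sub>R k + S \<omega>) \<bullet> j\<bar> powr c)
            * G (phi x j (t *\<^sub>R k + S \<omega>) \<bullet> phi x j k) \<partial>lborel) = F \<omega> * (\<integral>\<^sup>+t. indicator {-R..R} t * G (phi x j (S \<omega>) \<bullet> phi x j k + t * l) \<partial>lborel)" .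
  qed
  also have "\<dots> \<le> (\<integral>\<^sup>+\<omega>. F \<omega> * K \<partial>(Pi\<^sub>M (Basis-{k}) (\<lambda>_. lborel)))"
  proof (rule nn_integral_mono)
    fix \<omega> :: "'a \<Rightarrow> real"
    have l0: "l \<noteq> 0" using l1 by auto
    have "(\<integral>\<^sup>+t. indicator {-R..R} t * G (phi x j (S \<omega>) \<bullet> phi x j k + t * l) \<partial>lborel) \<le> ennreal (\<bar>l\<bar> powr a) * K"
      unfolding G_def by (rule nn_scaled_bound_if[OF l0 K])
    also have "\<dots> \<le> 1 * K"
      using l1 a by (intro mult_right_mono) (use powr_le1_aux[of l a] in \<open>auto simp: ennreal_le_1\<close>)
    finally show "F \<omega> * (\<integral>\<^sup>+t. indicator {-R..R} t * G (phi x j (S \<omega>) \<bullet> phi x j k + t * l) \<partial>lborel) \<le> F \<omega> * K"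
      by (intro mult_left_mono) simp_all
  qed
  also have "\<dots> = (\<integral>\<^sup>+\<omega>. F \<omega> \<partial>(Pi\<^sub>M (Basis-{k}) (\<lambda>_. lborel))) * K"
    by (rule nn_integral_multc) measurable
  also have "\<dots> \<le> Aint R c ^ (DIM('a) - 1) * K"
    unfolding F_def using prod_bound[OF k _ R, of j c] j kj by (intro mult_right_mono) auto
  finally show ?thesis unfolding G_def .
qed

lemma boxR_eq: "boxR R y = indicator {y. \<forall>i\<in>Basis. \<bar>y \<bullet> i\<bar> \<le> R} y"
proof (cases "\<forall>i\<in>Basis. \<bar>y \<bullet> i\<bar> \<le> R")
  case True
  then have "(\<Prod>i\<in>Basis. indicator {-R..R} (y \<bullet> i)) = (\<Prod>i\<in>(Basis::'a set). (1::ennreal))"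
    by (intro prod.cong) (auto simp: indicator_def abs_le_iff)
  then show ?thesis using True unfolding boxR_def by simp
next
  case False
  then obtain i where i: "i \<in> Basis" "\<bar>y \<bullet> i\<bar> > R" by auto
  then have "(\<Prod>i\<in>Basis. indicator {-R..R} (y \<bullet> i)) = (0::ennreal)"
    by (intro prod_zero bexI[of _ i]) (auto simp: indicator_def abs_le_iff)
  then show ?thesis using False unfolding boxR_def by simp
qed

lemma norm_le_sum_coords: "norm (y::'a::euclidean_space) \<le> (\<Sum>i\<in>Basis. \<bar>y \<bullet> i\<bar>)"
  by (rule norm_le_l1)

lemma boxR_phi:
  fixes x :: "'a::euclidean_space"
  assumes x: "norm x = 1" and j: "j \<in> Basis" and xj: "x \<bullet> j \<noteq> 0"
  shows "boxR 1 (phi x j z) \<le> boxR (real DIM('a)) z"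
proof (cases "\<forall>i\<in>Basis. \<bar>phi x j z \<bullet> i\<bar> \<le> 1")
  case True
  have "\<bar>z \<bullet> i\<bar> \<le> real DIM('a)" if i: "i \<in> Basis" for i
  proof (cases "i = j")
    case True
    have "\<bar>z \<bullet> j\<bar> = \<bar>x \<bullet> phi x j z\<bar>" using x_phi[OF xj] by simp
    also have "\<dots> \<le> norm x * norm (phi x j z)" by (rule Cauchy_Schwarz_ineq2)
    also have "\<dots> \<le> (\<Sum>i\<in>Basis. \<bar>phi x j z \<bullet> i\<bar>)" using x norm_le_sum_coords[of "phi x j z"] by simp
    also have "\<dots> \<le> (\<Sum>i\<in>(Basis::'a set). 1)" using \<open>\<forall>i\<in>Basis. \<bar>phi x j z \<bullet> i\<bar> \<le> 1\<close> by (intro sum_mono) auto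
    finally show ?thesis using True by simp
  next
    case False
    have "\<bar>z \<bullet> i\<bar> = \<bar>phi x j z \<bullet> i\<bar>" using phi_inner_j[OF j i False] by simp
    also have "\<dots> \<le> 1" using \<open>\<forall>i\<in>Basis. \<bar>phi x j z \<bullet> i\<bar> \<le> 1\<close> i by auto
    also have "1 \<le> real DIM('a)" using DIM_positive by (simp add: Suc_le_eq)
    finally show ?thesis .
  qed
  then show ?thesis unfolding boxR_eq by (auto simp: indicator_def)
next
  case False
  then show ?thesis unfolding boxR_eq by (auto simp: indicator_def)
qed

lemma exists_big_coord:
  fixes x :: "'a::euclidean_space"
  assumes x: "norm x = 1"
  obtains j where "j \<in> Basis" "(x \<bullet> j)^2 \<ge> 1 / real DIM('a)"
proof -
  have "\<exists>j\<in>Basis. (x \<bullet> j)^2 \<ge> 1 / real DIM('a)"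
  proof (rule ccontr)
    assume "\<not> ?thesis"
    then have "\<forall>j\<in>Basis. (x \<bullet> j)^2 < 1 / real DIM('a)" by auto
    then have "(\<Sum>j\<in>Basis. (x \<bullet> j)^2) < (\<Sum>j\<in>(Basis::'a set). 1 / real DIM('a))"
      by (intro sum_strict_mono) auto
    also have "\<dots> = 1" by simp
    also have "(\<Sum>j\<in>Basis. (x \<bullet> j)^2) = x \<bullet> x" by (simp add: euclidean_inner[of x x] power2_eq_square)
    also have "x \<bullet> x = 1" using x by (simp add: dot_square_norm)
    finally show False by simp
  qed
  then show ?thesis using that by blast
qed

lemma exists_other_basis:
  assumes "DIM('a::euclidean_space) \<ge> 2" "j \<in> (Basis :: 'a set)"
  obtains k where "k \<in> (Basis :: 'a set)" "k \<noteq> j"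
proof -
  have "card (Basis - {j} :: 'a set) \<ge> 1" using assms by (simp add: card_Diff_singleton)
  then have "Basis - {j} \<noteq> ({} :: 'a set)" by (metis card.empty not_one_le_zero)
  then show ?thesis using that by blast
qed

lemma if_K_bound: "(if u = 0 then \<infinity> else ennreal v * K) \<le> (K + 1) * (if u = 0 then \<infinity> else ennreal v)"
proof (cases "u = 0")
  case True then show ?thesis by (simp add: ennreal_mult_eq_top_iff)
next
  case False
  have "ennreal v * K \<le> ennreal v * (K + 1)" by (intro mult_left_mono) auto
  then show ?thesis using False by (simp add: mult_ac)
qed

lemma key_upper:
  fixes a b c :: real
  assumes dim: "DIM('a::euclidean_space) \<ge> 2" and a: "-1 < a" "a \<le> 0" and b: "-1 < b" "b \<le> 0" and c: "-1 < c" "c \<le> 0"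
  obtains C where "C < \<infinity>" "\<And>x::'a. norm x = 1 \<Longrightarrow> (\<integral>\<^sup>+y. boxR 1 y * ennreal (\<bar>x \<bullet> y\<bar> powr c) *
       (\<integral>\<^sup>+z. boxR 1 z * ennreal (\<bar>y \<bullet> z\<bar> powr a) * ennreal (\<bar>z \<bullet> x\<bar> powr b) \<partial>lborel) \<partial>lborel) \<le> C"
proof -
  define R where "R = real DIM('a)"
  have R1: "R \<ge> 1" unfolding R_def using DIM_positive by (simp add: Suc_le_eq)
  obtain K where K: "K < \<infinity>" "\<And>t0. (\<integral>\<^sup>+t. indicator {-R..R} t * ennreal (\<bar>t - t0\<bar> powr a) \<partial>lborel) \<le> K"
    using nn_shift_bound[OF a R1] by blast
  define C where "C = ennreal R * (Aint R b ^ (DIM('a) - 1) * (K + 1) * (Aint R c ^ (DIM('a) - 1) * K))"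
  have "C < \<infinity>"
    unfolding C_def using Aint_fin[OF b(1), of R] Aint_fin[OF c(1), of R] R1 K(1)
    by (simp add: ennreal_mult_less_top power_less_top_ennreal ennreal_add_eq_top less_top)
  moreover have "(\<integral>\<^sup>+y. boxR 1 y * ennreal (\<bar>x \<bullet> y\<bar> powr c) *
       (\<integral>\<^sup>+z. boxR 1 z * ennreal (\<bar>y \<bullet> z\<bar> powr a) * ennreal (\<bar>z \<bullet> x\<bar> powr b) \<partial>lborel) \<partial>lborel) \<le> C"
    if x: "norm x = 1" for x :: 'a
  proof -
    obtain j where j: "j \<in> Basis" "(x \<bullet> j)^2 \<ge> 1 / real DIM('a)"
      using exists_big_coord[OF x] by blast
    have xj: "x \<bullet> j \<noteq> 0" using j(2) by auto
    obtain k where k: "k \<in> Basis" "k \<noteq> j" using exists_other_basis[OF dim j(1)] by blast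
    define g where "g y z = boxR 1 z * ennreal (\<bar>y \<bullet> z\<bar> powr a) * ennreal (\<bar>z \<bullet> x\<bar> powr b)" for y z :: 'a
    define H where "H y = boxR 1 y * ennreal (\<bar>x \<bullet> y\<bar> powr c) * (\<integral>\<^sup>+z. g y z \<partial>lborel)" for y :: 'a
    have gm[measurable]: "case_prod g \<in> borel_measurable (borel \<Otimes>\<^sub>M lborel)" unfolding g_def by measurable
    have [measurable]: "g y \<in> borel_measurable borel" for y unfolding g_def by measurable
    have [measurable]: "H \<in> borel_measurable borel" unfolding H_def by measurable
    have inv: "ennreal (1 / \<bar>x \<bullet> j\<bar>) * ennreal \<bar>x \<bullet> j\<bar> = 1"
      using xj by (simp add: ennreal_mult'[symmetric])
    have chg: "(\<integral>\<^sup>+z. f z \<partial>lborel) = ennreal (1 / \<bar>x \<bullet> j\<bar>) * (\<integral>\<^sup>+z. f (phi x j z) \<partial>lborel)"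
      if [measurable]: "f \<in> borel_measurable borel" for f :: "'a \<Rightarrow> ennreal"
      unfolding nn_integral_phi[OF j(1) xj that] mult.assoc[symmetric] inv by simp
    define C1 where "C1 = Aint R b ^ (DIM('a) - 1) * (K + 1)"
    define pw where "pw y = (if phi x j y \<bullet> phi x j k = 0 then \<infinity> else ennreal (\<bar>phi x j y \<bullet> phi x j k\<bar> powr a))" for y
    have [measurable]: "pw \<in> borel_measurable borel" unfolding pw_def by measurable
    have Hb: "H (phi x j y) \<le> ennreal (1 / \<bar>x \<bullet> j\<bar>) * (C1 * (boxR R y * ennreal (\<bar>y \<bullet> j\<bar> powr c) * pw y))" for y
    proof -
      have "(\<integral>\<^sup>+z. g (phi x j y) z \<partial>lborel) = ennreal (1 / \<bar>x \<bullet> j\<bar>) * (\<integral>\<^sup>+z. g (phi x j y) (phi x j z) \<partial>lborel)"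
        by (rule chg) measurable
      also have "(\<integral>\<^sup>+z. g (phi x j y) (phi x j z) \<partial>lborel) \<le> (\<integral>\<^sup>+z. boxR R z * ennreal (\<bar>phi x j y \<bullet> phi x j z\<bar> powr a) * ennreal (\<bar>z \<bullet> j\<bar> powr b) \<partial>lborel)"
      proof (rule nn_integral_mono)
        fix z
        have "phi x j z \<bullet> x = z \<bullet> j" using x_phi[OF xj] by (simp add: inner_commute)
        then show "g (phi x j y) (phi x j z) \<le> boxR R z * ennreal (\<bar>phi x j y \<bullet> phi x j z\<bar> powr a) * ennreal (\<bar>z \<bullet> j\<bar> powr b)"
          unfolding g_def R_def using boxR_phi[OF x j(1) xj, of z] by (auto intro!: mult_right_mono)
      qed
      also have "\<dots> \<le> Aint R b ^ (DIM('a) - 1) * (if phi x j y \<bullet> phi x j k = 0 then \<infinity> else ennreal (\<bar>phi x j y \<bullet> phi x j k\<bar> powr a) * K)"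
        using R1 by (intro z_inner[OF j(1) k(1) k(2)] K(2)) auto
      also have "\<dots> \<le> C1 * pw y"
        unfolding C1_def pw_def mult.assoc by (intro mult_left_mono if_K_bound) auto
      finally have I: "(\<integral>\<^sup>+z. g (phi x j y) z \<partial>lborel) \<le> ennreal (1 / \<bar>x \<bullet> j\<bar>) * (C1 * pw y)"
        by (simp add: mult_left_mono)
      have "H (phi x j y) = boxR 1 (phi x j y) * ennreal (\<bar>y \<bullet> j\<bar> powr c) * (\<integral>\<^sup>+z. g (phi x j y) z \<partial>lborel)"
        unfolding H_def x_phi[OF xj] ..
      also have "\<dots> \<le> boxR R y * ennreal (\<bar>y \<bullet> j\<bar> powr c) * (ennreal (1 / \<bar>x \<bullet> j\<bar>) * (C1 * pw y))"
        using boxR_phi[OF x j(1) xj, of y] I unfolding R_def by (intro mult_mono) auto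
      finally show ?thesis by (simp add: mult_ac)
    qed
    have "(\<integral>\<^sup>+y. H y \<partial>lborel) = ennreal (1 / \<bar>x \<bullet> j\<bar>) * (\<integral>\<^sup>+y. H (phi x j y) \<partial>lborel)"
      by (rule chg) measurable
    also have "(\<integral>\<^sup>+y. H (phi x j y) \<partial>lborel) \<le> (\<integral>\<^sup>+y. ennreal (1 / \<bar>x \<bullet> j\<bar>) * C1 * (boxR R y * ennreal (\<bar>y \<bullet> j\<bar> powr c) * pw y) \<partial>lborel)"
      using Hb by (intro nn_integral_mono) (simp add: mult.assoc)
    also have "\<dots> = ennreal (1 / \<bar>x \<bullet> j\<bar>) * C1 * (\<integral>\<^sup>+y. boxR R y * ennreal (\<bar>y \<bullet> j\<bar> powr c) * pw y \<partial>lborel)"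
      by (rule nn_integral_cmult) measurable
    also have "(\<integral>\<^sup>+y. boxR R y * ennreal (\<bar>y \<bullet> j\<bar> powr c) * pw y \<partial>lborel) \<le> Aint R c ^ (DIM('a) - 1) * K"
      unfolding pw_def using R1 by (intro y_outer[OF j(1) k(1) k(2) _ a(2) K(2)]) auto
    finally have T: "(\<integral>\<^sup>+y. H y \<partial>lborel) \<le> ennreal (1 / \<bar>x \<bullet> j\<bar>) * (ennreal (1 / \<bar>x \<bullet> j\<bar>) * C1 * (Aint R c ^ (DIM('a) - 1) * K))"
      by (simp add: mult_left_mono)
    have E: "ennreal (1 / \<bar>x \<bullet> j\<bar>) * ennreal (1 / \<bar>x \<bullet> j\<bar>) = ennreal (1 / (x \<bullet> j)^2)"
      by (simp add: ennreal_mult'[symmetric] power2_eq_square)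
    have "1 / (x \<bullet> j)^2 \<le> R"
      using j(2) xj unfolding R_def by (simp add: field_simps)
    then have "ennreal (1 / \<bar>x \<bullet> j\<bar>) * ennreal (1 / \<bar>x \<bullet> j\<bar>) \<le> ennreal R" unfolding E by (rule ennreal_leI)
    then have "(\<integral>\<^sup>+y. H y \<partial>lborel) \<le> C"
      using T unfolding C_def C1_def mult.assoc[symmetric]
      by (smt (verit) mult_right_mono zero_le order_trans)
    then show ?thesis unfolding H_def g_def .
  qed
  ultimately show ?thesis using that by blast
qed

abbreviation B0 :: "(real^'n) set" where "B0 \<equiv> ball 0 1 - {0}"

lemma B0_sets[measurable]: "B0 \<in> sets borel" by simp

lemma space_sphere_measure: "space (sphere_measure :: (real^'n) measure) = sphere 0 1"
  unfolding sphere_measure_def by simp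

lemma sets_sphere_measure: "sets (sphere_measure :: (real^'n) measure) = sets (restrict_space borel (sphere 0 1))"
  unfolding sphere_measure_def by simp

lemma normalize_measurable[measurable]: "(\<lambda>y::real^'n. (1 / norm y) *\<^sub>R y) \<in> borel_measurable borel"
  by measurable

lemma nn_integral_sphere:
  fixes f :: "real^'n \<Rightarrow> ennreal"
  assumes f[measurable]: "f \<in> borel_measurable borel"
  shows "(\<integral>\<^sup>+x. f x \<partial>sphere_measure) = ennreal (real CARD('n)) * (\<integral>\<^sup>+y. indicator B0 y * f ((1 / norm y) *\<^sub>R y) \<partial>lborel)"
proof -
  let ?T = "\<lambda>y::real^'n. (1 / norm y) *\<^sub>R y"
  have Tm: "?T \<in> measurable (restrict_space lborel B0) (restrict_space borel (sphere 0 1))"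
  proof (rule measurable_restrict_space3)
    show "?T \<in> measurable lborel borel" by measurable
    show "?T \<in> B0 \<rightarrow> sphere 0 1" by auto
  qed
  have fm: "f \<in> borel_measurable (restrict_space borel (sphere 0 1))"
    by (rule measurable_restrict_space1) (rule f)
  have fm2: "(\<lambda>x. ennreal (real CARD('n)) * f x) \<in> borel_measurable (restrict_space borel (sphere 0 1))"
    by (rule measurable_restrict_space1) measurable
  have "(\<integral>\<^sup>+x. f x \<partial>sphere_measure) = (\<integral>\<^sup>+x. ennreal (real CARD('n)) * f x \<partial>distr (restrict_space lborel B0) (restrict_space borel (sphere 0 1)) ?T)"
    unfolding sphere_measure_def by (rule nn_integral_density) (auto simp: fm)
  also have "\<dots> = (\<integral>\<^sup>+y. ennreal (real CARD('n)) * f (?T y) \<partial>restrict_space lborel B0)"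
    by (rule nn_integral_distr[OF Tm]) (use fm2 in simp)
  also have "\<dots> = (\<integral>\<^sup>+y. ennreal (real CARD('n)) * f (?T y) * indicator B0 y \<partial>lborel)"
    by (rule nn_integral_restrict_space) simp
  also have "\<dots> = (\<integral>\<^sup>+y. ennreal (real CARD('n)) * (indicator B0 y * f (?T y)) \<partial>lborel)"
    by (simp add: mult_ac)
  also have "\<dots> = ennreal (real CARD('n)) * (\<integral>\<^sup>+y. indicator B0 y * f (?T y) \<partial>lborel)"
    by (rule nn_integral_cmult) measurable
  finally show ?thesis .
qed

lemma emeasure_sphere_fin: "emeasure (sphere_measure :: (real^'n) measure) (space sphere_measure) < \<infinity>"
proof -
  have "emeasure (sphere_measure :: (real^'n) measure) (space sphere_measure) = (\<integral>\<^sup>+x. 1 \<partial>(sphere_measure :: (real^'n) measure))"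
    by simp
  also have "\<dots> = ennreal (real CARD('n)) * (\<integral>\<^sup>+y. indicator B0 y * 1 \<partial>(lborel :: (real^'n) measure))"
    by (rule nn_integral_sphere) simp
  also have "(\<integral>\<^sup>+y. indicator B0 y * 1 \<partial>(lborel :: (real^'n) measure)) \<le> (\<integral>\<^sup>+y. indicator (ball (0::real^'n) 1) y \<partial>lborel)"
    by (intro nn_integral_mono) (auto simp: indicator_def)
  also have "\<dots> = emeasure lborel (ball (0::real^'n) 1)" by simp
  finally show ?thesis
    using emeasure_lborel_ball_finite[of "0::real^'n" 1]
    by (smt (verit) ennreal_mult_less_top ennreal_less_top infinity_ennreal_def le_less_trans mult_left_mono zero_le)
qed

lemma finite_measure_sphere: "finite_measure (sphere_measure :: (real^'n::finite) measure)"
proof (rule finite_measureI)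
  have "emeasure (sphere_measure :: (real^'n) measure) (space sphere_measure) < \<infinity>" by (rule emeasure_sphere_fin)
  then show "emeasure (sphere_measure :: (real^'n) measure) (space sphere_measure) \<noteq> \<infinity>" by simp
qed

lemma sf_sphere: "sigma_finite_measure (sphere_measure :: (real^'n::finite) measure)"
proof -
  interpret finite_measure "sphere_measure :: (real^'n) measure" by (rule finite_measure_sphere)
  show ?thesis by (rule sigma_finite_measure_axioms)
qed

lemma id_sphere_meas: "(\<lambda>x. x) \<in> measurable (sphere_measure :: (real^'n::finite) measure) borel"
  unfolding measurable_cong_sets[OF sets_sphere_measure refl]
  by (rule measurable_restrict_space1) simp

lemma meas3:
  fixes F :: "(real^'n::finite) \<times> (real^'n) \<times> (real^'n) \<Rightarrow> ennreal"
  assumes F: "F \<in> borel_measurable borel"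
  shows "F \<in> borel_measurable (sphere_measure \<Otimes>\<^sub>M sphere_measure \<Otimes>\<^sub>M sphere_measure)"
proof -
  note id_sphere_meas[measurable]
  have "(\<lambda>(x,y,z). (x,y,z)) \<in> measurable (sphere_measure \<Otimes>\<^sub>M sphere_measure \<Otimes>\<^sub>M (sphere_measure :: (real^'n) measure)) (borel \<Otimes>\<^sub>M borel \<Otimes>\<^sub>M borel)"
    by measurable
  then have "(\<lambda>p. p) \<in> measurable (sphere_measure \<Otimes>\<^sub>M sphere_measure \<Otimes>\<^sub>M (sphere_measure :: (real^'n) measure)) borel"
    by (simp add: borel_prod split_beta')
  from measurable_compose[OF this F] show ?thesis by simp
qed

lemma meas2:
  fixes F :: "(real^'n::finite) \<times> (real^'n) \<Rightarrow> ennreal"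
  assumes F: "F \<in> borel_measurable borel"
  shows "F \<in> borel_measurable (sphere_measure \<Otimes>\<^sub>M sphere_measure)"
proof -
  note id_sphere_meas[measurable]
  have "(\<lambda>(x,y). (x,y)) \<in> measurable (sphere_measure \<Otimes>\<^sub>M (sphere_measure :: (real^'n) measure)) (borel \<Otimes>\<^sub>M borel)"
    by measurable
  then have "(\<lambda>p. p) \<in> measurable (sphere_measure \<Otimes>\<^sub>M (sphere_measure :: (real^'n) measure)) borel"
    by (simp add: borel_prod split_beta')
  from measurable_compose[OF this F] show ?thesis by simp
qed

definition iter3 :: "((real^'n::finite) \<times> (real^'n) \<times> (real^'n) \<Rightarrow> ennreal) \<Rightarrow> ennreal" where
  "iter3 F = (\<integral>\<^sup>+x. \<integral>\<^sup>+y. \<integral>\<^sup>+z. F (x, y, z) \<partial>sphere_measure \<partial>sphere_measure \<partial>sphere_measure)"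

lemma prod_eq_iter3:
  fixes F :: "(real^'n::finite) \<times> (real^'n) \<times> (real^'n) \<Rightarrow> ennreal"
  assumes F[measurable]: "F \<in> borel_measurable borel"
  shows "(\<integral>\<^sup>+p. F p \<partial>(sphere_measure \<Otimes>\<^sub>M sphere_measure \<Otimes>\<^sub>M sphere_measure)) = iter3 F"
proof -
  interpret s: sigma_finite_measure "sphere_measure :: (real^'n) measure" by (rule sf_sphere)
  interpret s2: sigma_finite_measure "sphere_measure \<Otimes>\<^sub>M (sphere_measure :: (real^'n) measure)"
    by (intro sigma_finite_pair_measure sf_sphere)
  have "(\<integral>\<^sup>+p. F p \<partial>(sphere_measure \<Otimes>\<^sub>M sphere_measure \<Otimes>\<^sub>M sphere_measure))
     = (\<integral>\<^sup>+x. \<integral>\<^sup>+q. F (x, q) \<partial>(sphere_measure \<Otimes>\<^sub>M sphere_measure) \<partial>sphere_measure)"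
    by (rule s2.nn_integral_fst[symmetric]) (rule meas3[OF F])
  also have "\<dots> = iter3 F"
    unfolding iter3_def
  proof (rule nn_integral_cong)
    fix x :: "real^'n"
    have c: "(\<lambda>q::(real^'n)\<times>(real^'n). (x, q)) \<in> borel_measurable borel"
      by (intro borel_measurable_continuous_onI continuous_intros)
    have "(\<lambda>q. F (x, q)) \<in> borel_measurable borel" using measurable_compose[OF c F] by (simp add: o_def)
    then show "(\<integral>\<^sup>+q. F (x, q) \<partial>(sphere_measure \<Otimes>\<^sub>M sphere_measure)) = (\<integral>\<^sup>+y. \<integral>\<^sup>+z. F (x, y, z) \<partial>sphere_measure \<partial>sphere_measure)"
      by (intro s.nn_integral_fst[symmetric] meas2)
  qed
  finally show ?thesis .
qed

lemma iter3_swap_yz: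
  fixes F :: "(real^'n::finite) \<times> (real^'n) \<times> (real^'n) \<Rightarrow> ennreal"
  assumes F[measurable]: "F \<in> borel_measurable borel"
  shows "iter3 F = iter3 (\<lambda>(x,y,z). F (x, z, y))"
  unfolding iter3_def
proof (rule nn_integral_cong)
  interpret ps: pair_sigma_finite "sphere_measure :: (real^'n) measure" "sphere_measure :: (real^'n) measure"
    by (intro pair_sigma_finite.intro sf_sphere)
  fix x :: "real^'n"
  have c: "(\<lambda>q::(real^'n)\<times>(real^'n). (x, q)) \<in> borel_measurable borel"
    by (intro borel_measurable_continuous_onI continuous_intros)
  have "(\<lambda>(y, z). F (x, y, z)) = (\<lambda>q. F (x, q))" by auto
  then have "(\<lambda>(y, z). F (x, y, z)) \<in> borel_measurable borel" using measurable_compose[OF c F] by (simp add: o_def)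
  then have "(\<lambda>(y, z). F (x, y, z)) \<in> borel_measurable (sphere_measure \<Otimes>\<^sub>M sphere_measure)" by (rule meas2)
  then show "(\<integral>\<^sup>+y. \<integral>\<^sup>+z. F (x, y, z) \<partial>sphere_measure \<partial>sphere_measure) =
        (\<integral>\<^sup>+y. \<integral>\<^sup>+z. (\<lambda>(x, y, z). F (x, z, y)) (x, y, z) \<partial>sphere_measure \<partial>sphere_measure)"
    using ps.Fubini'[of "\<lambda>y z. F (x, y, z)"] by simp
qed

lemma iter3_swap_xy:
  fixes F :: "(real^'n::finite) \<times> (real^'n) \<times> (real^'n) \<Rightarrow> ennreal"
  assumes F[measurable]: "F \<in> borel_measurable borel"
  shows "iter3 F = iter3 (\<lambda>(x,y,z). F (y, x, z))"
proof -
  interpret s: sigma_finite_measure "sphere_measure :: (real^'n) measure" by (rule sf_sphere)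
  interpret ps: pair_sigma_finite "sphere_measure :: (real^'n) measure" "sphere_measure :: (real^'n) measure"
    by (intro pair_sigma_finite.intro sf_sphere)
  have m: "(\<lambda>((x, y), z). F (x, y, z)) \<in> borel_measurable ((sphere_measure \<Otimes>\<^sub>M sphere_measure) \<Otimes>\<^sub>M sphere_measure)"
  proof -
    note id_sphere_meas[measurable]
    have "(\<lambda>p. (fst (fst p), snd (fst p), snd p)) \<in> measurable ((sphere_measure \<Otimes>\<^sub>M sphere_measure) \<Otimes>\<^sub>M (sphere_measure :: (real^'n) measure)) (borel \<Otimes>\<^sub>M borel \<Otimes>\<^sub>M borel)"
      by measurable
    then have "(\<lambda>p. (fst (fst p), snd (fst p), snd p)) \<in> measurable ((sphere_measure \<Otimes>\<^sub>M sphere_measure) \<Otimes>\<^sub>M (sphere_measure :: (real^'n) measure)) borel"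
      by (simp add: borel_prod)
    from measurable_compose[OF this F] show ?thesis by (simp add: split_beta')
  qed
  have G: "(\<lambda>(x, y). \<integral>\<^sup>+z. F (x, y, z) \<partial>sphere_measure) \<in> borel_measurable (sphere_measure \<Otimes>\<^sub>M sphere_measure)"
    using s.borel_measurable_nn_integral[OF m] by (simp add: split_beta')
  have "iter3 F = (\<integral>\<^sup>+x. \<integral>\<^sup>+y. (\<lambda>x y. \<integral>\<^sup>+z. F (x, y, z) \<partial>sphere_measure) x y \<partial>sphere_measure \<partial>sphere_measure)"
    unfolding iter3_def by simp
  also have "\<dots> = (\<integral>\<^sup>+y. \<integral>\<^sup>+x. (\<lambda>x y. \<integral>\<^sup>+z. F (x, y, z) \<partial>sphere_measure) x y \<partial>sphere_measure \<partial>sphere_measure)"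
    using ps.Fubini'[of "\<lambda>x y. \<integral>\<^sup>+z. F (x, y, z) \<partial>sphere_measure"] G by simp
  also have "\<dots> = iter3 (\<lambda>(x,y,z). F (y, x, z))" unfolding iter3_def by simp
  finally show ?thesis .
qed

definition R3 :: "real \<Rightarrow> real \<Rightarrow> real \<Rightarrow> (real^'n::finite) \<times> (real^'n) \<times> (real^'n) \<Rightarrow> ennreal" where
  "R3 a b c p = ennreal (\<bar>fst (snd p) \<bullet> snd (snd p)\<bar> powr a) * ennreal (\<bar>snd (snd p) \<bullet> fst p\<bar> powr b) * ennreal (\<bar>fst p \<bullet> fst (snd p)\<bar> powr c)"
lemma R3_simp: "R3 a b c (x, y, z) = ennreal (\<bar>y \<bullet> z\<bar> powr a) * ennreal (\<bar>z \<bullet> x\<bar> powr b) * ennreal (\<bar>x \<bullet> y\<bar> powr c)"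
  unfolding R3_def by simp
lemma R3_meas': "R3 a b c \<in> borel_measurable (borel \<Otimes>\<^sub>M borel \<Otimes>\<^sub>M borel)"
  unfolding R3_def by measurable
lemma R3_meas[measurable]: "R3 a b c \<in> borel_measurable borel"
  using R3_meas' by (simp add: borel_prod)

definition nrm :: "real^'n::finite \<Rightarrow> real^'n" where "nrm y = (1 / norm y) *\<^sub>R y"
lemma nrm_meas[measurable]: "nrm \<in> borel_measurable borel" unfolding nrm_def by measurable

definition L1 :: "real \<Rightarrow> real \<Rightarrow> real \<Rightarrow> real^'n::finite \<Rightarrow> real^'n \<Rightarrow> ennreal" where
  "L1 a b c x y = (\<integral>\<^sup>+z. indicator B0 z * R3 a b c (x, y, nrm z) \<partial>lborel)"
definition L2 :: "real \<Rightarrow> real \<Rightarrow> real \<Rightarrow> real^'n::finite \<Rightarrow> ennreal" where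
  "L2 a b c x = (\<integral>\<^sup>+y. indicator B0 y * L1 a b c x (nrm y) \<partial>lborel)"

lemma L1_meas: "(\<lambda>p. L1 a b c (fst p) (snd p)) \<in> borel_measurable (borel \<Otimes>\<^sub>M borel)"
  unfolding L1_def R3_def by measurable

lemma L1_meas_y[measurable]: "L1 a b c x \<in> borel_measurable borel"
proof -
  have "(\<lambda>y. (x, y)) \<in> measurable borel (borel \<Otimes>\<^sub>M borel)" by measurable
  from measurable_compose[OF this L1_meas] show ?thesis by simp
qed

lemma L2_meas[measurable]: "L2 a b c \<in> borel_measurable borel"
proof -
  have "(\<lambda>p. indicator B0 (snd p) * L1 a b c (fst p) (nrm (snd p))) \<in> borel_measurable (borel \<Otimes>\<^sub>M lborel)"
  proof -
    have "(\<lambda>p. (fst p, nrm (snd p))) \<in> measurable (borel \<Otimes>\<^sub>M lborel) (borel \<Otimes>\<^sub>M (borel :: (real^'n) measure))" by measurable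
    from measurable_compose[OF this L1_meas] have [measurable]: "(\<lambda>p. L1 a b c (fst p) (nrm (snd p))) \<in> borel_measurable (borel \<Otimes>\<^sub>M lborel)"
      by simp
    show ?thesis by measurable
  qed
  then show ?thesis unfolding L2_def using lborel.borel_measurable_nn_integral[of "\<lambda>x y. indicator B0 y * L1 a b c x (nrm y)" borel]
    by (simp add: split_beta')
qed

lemma iter3_R3:
  "iter3 (R3 a b c :: (real^'n::finite) \<times> _ \<Rightarrow> _) = ennreal (real CARD('n)) * (ennreal (real CARD('n)) * (ennreal (real CARD('n)) *
     (\<integral>\<^sup>+(x::real^'n). indicator B0 x * L2 a b c (nrm x) \<partial>lborel)))"
proof -
  let ?N = "ennreal (real CARD('n))"
  have i1: "(\<integral>\<^sup>+z. R3 a b c (x, y, z) \<partial>sphere_measure) = ?N * L1 a b c x y" for x y :: "real^'n"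
    unfolding L1_def nrm_def by (rule nn_integral_sphere) (unfold R3_simp, measurable)
  have i2: "(\<integral>\<^sup>+y. \<integral>\<^sup>+z. R3 a b c (x, y, z) \<partial>sphere_measure \<partial>sphere_measure) = ?N * (?N * L2 a b c x)" for x :: "real^'n"
  proof -
    have "(\<integral>\<^sup>+y. \<integral>\<^sup>+z. R3 a b c (x, y, z) \<partial>sphere_measure \<partial>sphere_measure) = (\<integral>\<^sup>+y. ?N * L1 a b c x y \<partial>sphere_measure)"
      unfolding i1 ..
    also have "\<dots> = ?N * (\<integral>\<^sup>+y. L1 a b c x y \<partial>sphere_measure)"
      by (rule nn_integral_cmult) (rule measurable_compose[OF id_sphere_meas L1_meas_y])
    also have "(\<integral>\<^sup>+y. L1 a b c x y \<partial>sphere_measure) = ?N * L2 a b c x"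
      unfolding L2_def nrm_def by (rule nn_integral_sphere) measurable
    finally show ?thesis .
  qed
  have "iter3 (R3 a b c :: (real^'n::finite) \<times> _ \<Rightarrow> _) = (\<integral>\<^sup>+(x::real^'n). (\<integral>\<^sup>+y. \<integral>\<^sup>+z. R3 a b c (x, y, z) \<partial>sphere_measure \<partial>sphere_measure) \<partial>sphere_measure)"
    by (simp add: iter3_def)
  also have "\<dots> = (\<integral>\<^sup>+(x::real^'n). ?N * (?N * L2 a b c x) \<partial>sphere_measure)"
    by (rule nn_integral_cong) (rule i2)
  also have "\<dots> = ?N * (?N * (\<integral>\<^sup>+(x::real^'n). L2 a b c x \<partial>sphere_measure))"
  proof -
    have m[measurable]: "L2 a b c \<in> borel_measurable (sphere_measure :: (real^'n) measure)"
      by (rule measurable_compose[OF id_sphere_meas L2_meas])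
    have "(\<integral>\<^sup>+(x::real^'n). ?N * (?N * L2 a b c x) \<partial>sphere_measure) = ?N * (\<integral>\<^sup>+(x::real^'n). ?N * L2 a b c x \<partial>sphere_measure)"
      by (rule nn_integral_cmult) measurable
    also have "(\<integral>\<^sup>+(x::real^'n). ?N * L2 a b c x \<partial>sphere_measure) = ?N * (\<integral>\<^sup>+(x::real^'n). L2 a b c x \<partial>sphere_measure)"
      by (rule nn_integral_cmult) measurable
    finally show ?thesis .
  qed
  also have "(\<integral>\<^sup>+(x::real^'n). L2 a b c x \<partial>sphere_measure) = ?N * (\<integral>\<^sup>+(x::real^'n). indicator B0 x * L2 a b c (nrm x) \<partial>lborel)"
    unfolding nrm_def by (rule nn_integral_sphere) measurable
  finally show ?thesis .
qed

lemma powr_reduce: fixes s a :: real shows "0 \<le> s \<Longrightarrow> s \<le> 1 \<Longrightarrow> s powr a \<le> s powr (min a 0)"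
proof (cases "a \<le> 0")
  case True then show ?thesis by (simp add: min_def)
next
  case False
  assume s: "0 \<le> s" "s \<le> 1"
  have "s powr a \<le> 1 powr a" using s False by (intro powr_mono2) auto
  then show ?thesis using False s by (cases "s = 0") (auto simp: min_def)
qed

lemma powr_div_le: fixes a r t :: real shows "a \<le> 0 \<Longrightarrow> 0 < r \<Longrightarrow> r \<le> 1 \<Longrightarrow> 0 \<le> t \<Longrightarrow> (t / r) powr a \<le> t powr a"
proof (cases "t = 0")
  case False
  assume a: "a \<le> 0" "0 < r" "r \<le> 1" "0 \<le> t"
  have "t * r \<le> t" using a mult_left_le[of r t] by simp
  then have "t \<le> t / r" using a by (simp add: le_divide_eq)
  then show ?thesis using a False by (intro powr_mono2') auto
qed simp

lemma nrm_inner_left: "nrm y \<bullet> w = (y \<bullet> w) / norm y"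
  unfolding nrm_def by simp
lemma nrm_inner_right: "w \<bullet> nrm y = (w \<bullet> y) / norm y"
  unfolding nrm_def by simp
lemma norm_nrm: "y \<noteq> 0 \<Longrightarrow> norm (nrm y) = 1"
  unfolding nrm_def by simp

lemma abs_inner_unit: "norm v = 1 \<Longrightarrow> norm w = 1 \<Longrightarrow> \<bar>v \<bullet> w\<bar> \<le> 1"
  using Cauchy_Schwarz_ineq2[of v w] by simp

lemma hat_bound:
  fixes u y z :: "real^'n::finite"
  assumes u: "norm u = 1" and y: "y \<in> B0" and z: "z \<in> B0"
    and a: "a' = min a 0" and b: "b' = min b 0" and c: "c' = min c 0"
  shows "R3 a b c (u, nrm y, nrm z) \<le> ennreal (\<bar>u \<bullet> y\<bar> powr c') * (ennreal (\<bar>y \<bullet> z\<bar> powr a') * ennreal (\<bar>z \<bullet> u\<bar> powr b'))"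
proof -
  have ny: "0 < norm y" "norm y \<le> 1" and nz: "0 < norm z" "norm z \<le> 1" using y z by auto
  have yz1: "\<bar>nrm y \<bullet> nrm z\<bar> \<le> 1" using y z by (intro abs_inner_unit norm_nrm) auto
  have zu1: "\<bar>nrm z \<bullet> u\<bar> \<le> 1" using z u by (intro abs_inner_unit norm_nrm) auto
  have uy1: "\<bar>u \<bullet> nrm y\<bar> \<le> 1" using y u by (intro abs_inner_unit norm_nrm) auto
  have "\<bar>nrm y \<bullet> nrm z\<bar> powr a \<le> \<bar>nrm y \<bullet> nrm z\<bar> powr a'"
    unfolding a using yz1 by (intro powr_reduce) auto
  also have "\<bar>nrm y \<bullet> nrm z\<bar> powr a' = (\<bar>y \<bullet> z\<bar> / (norm y * norm z)) powr a'"
    by (simp add: nrm_inner_left nrm_inner_right abs_mult)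
  also have "(\<bar>y \<bullet> z\<bar> / (norm y * norm z)) powr a' \<le> \<bar>y \<bullet> z\<bar> powr a'"
    using ny nz unfolding a by (intro powr_div_le) (auto simp: mult_le_one)
  finally have A: "\<bar>nrm y \<bullet> nrm z\<bar> powr a \<le> \<bar>y \<bullet> z\<bar> powr a'" .
  have "\<bar>nrm z \<bullet> u\<bar> powr b \<le> \<bar>nrm z \<bullet> u\<bar> powr b'"
    unfolding b using zu1 by (intro powr_reduce) auto
  also have "\<bar>nrm z \<bullet> u\<bar> powr b' = (\<bar>z \<bullet> u\<bar> / norm z) powr b'"
    by (simp add: nrm_inner_left)
  also have "(\<bar>z \<bullet> u\<bar> / norm z) powr b' \<le> \<bar>z \<bullet> u\<bar> powr b'"
    using nz unfolding b by (intro powr_div_le) auto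
  finally have B: "\<bar>nrm z \<bullet> u\<bar> powr b \<le> \<bar>z \<bullet> u\<bar> powr b'" .
  have "\<bar>u \<bullet> nrm y\<bar> powr c \<le> \<bar>u \<bullet> nrm y\<bar> powr c'"
    unfolding c using uy1 by (intro powr_reduce) auto
  also have "\<bar>u \<bullet> nrm y\<bar> powr c' = (\<bar>u \<bullet> y\<bar> / norm y) powr c'"
    by (simp add: nrm_inner_right)
  also have "(\<bar>u \<bullet> y\<bar> / norm y) powr c' \<le> \<bar>u \<bullet> y\<bar> powr c'"
    using ny unfolding c by (intro powr_div_le) auto
  finally have C: "\<bar>u \<bullet> nrm y\<bar> powr c \<le> \<bar>u \<bullet> y\<bar> powr c'" .
  have "ennreal (\<bar>nrm y \<bullet> nrm z\<bar> powr a) * ennreal (\<bar>nrm z \<bullet> u\<bar> powr b) * ennreal (\<bar>u \<bullet> nrm y\<bar> powr c)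
      \<le> ennreal (\<bar>y \<bullet> z\<bar> powr a') * ennreal (\<bar>z \<bullet> u\<bar> powr b') * ennreal (\<bar>u \<bullet> y\<bar> powr c')"
    using A B C by (intro mult_mono ennreal_leI) auto
  then show ?thesis unfolding R3_simp by (simp add: mult_ac)
qed

lemma B0_le_boxR: "indicator B0 (y::real^'n::finite) \<le> boxR 1 y"
proof (cases "y \<in> B0")
  case True
  have "\<forall>i\<in>Basis. \<bar>y \<bullet> i\<bar> \<le> 1"
  proof
    fix i :: "real^'n" assume "i \<in> Basis"
    then show "\<bar>y \<bullet> i\<bar> \<le> 1" using Basis_le_norm[of i y] True by auto
  qed
  then show ?thesis unfolding boxR_eq by (auto simp: indicator_def)
qed (auto simp: indicator_def)

lemma boxR_B0: "y \<in> B0 \<Longrightarrow> boxR 1 (y::real^'n::finite) = 1"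
proof -
  assume y: "y \<in> B0"
  have "\<forall>i\<in>Basis. \<bar>y \<bullet> i\<bar> \<le> 1"
  proof
    fix i :: "real^'n" assume "i \<in> Basis"
    then show "\<bar>y \<bullet> i\<bar> \<le> 1" using Basis_le_norm[of i y] y by auto
  qed
  then show ?thesis unfolding boxR_eq by simp
qed

lemma upper_fin:
  fixes a b c :: real
  assumes n2: "CARD('n::finite) \<ge> 2" and a: "a > -1" and b: "b > -1" and c: "c > -1"
  shows "iter3 (R3 a b c :: (real^'n) \<times> _ \<Rightarrow> _) < \<infinity>"
proof -
  define a' where "a' = min a 0"
  define b' where "b' = min b 0"
  define c' where "c' = min c 0"
  have a': "-1 < a'" "a' \<le> 0" and b': "-1 < b'" "b' \<le> 0" and c': "-1 < c'" "c' \<le> 0"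
    using a b c by (auto simp: a'_def b'_def c'_def)
  have dim: "DIM(real^'n) \<ge> 2" using n2 by simp
  obtain C where C: "C < \<infinity>" "\<And>x::real^'n. norm x = 1 \<Longrightarrow> (\<integral>\<^sup>+y. boxR 1 y * ennreal (\<bar>x \<bullet> y\<bar> powr c') *
       (\<integral>\<^sup>+z. boxR 1 z * ennreal (\<bar>y \<bullet> z\<bar> powr a') * ennreal (\<bar>z \<bullet> x\<bar> powr b') \<partial>lborel) \<partial>lborel) \<le> C"
    using key_upper[OF dim a' b' c'] by blast
  have L2b: "L2 a b c (nrm x) \<le> C" if x: "x \<in> B0" for x :: "real^'n"
  proof -
    define u where "u = nrm x"
    have u: "norm u = 1" unfolding u_def using x by (auto intro: norm_nrm)
    have "L2 a b c u \<le> (\<integral>\<^sup>+y. boxR 1 y * ennreal (\<bar>u \<bullet> y\<bar> powr c') *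
       (\<integral>\<^sup>+z. boxR 1 z * ennreal (\<bar>y \<bullet> z\<bar> powr a') * ennreal (\<bar>z \<bullet> u\<bar> powr b') \<partial>lborel) \<partial>lborel)"
      unfolding L2_def
    proof (rule nn_integral_mono)
      fix y :: "real^'n"
      show "indicator B0 y * L1 a b c u (nrm y) \<le> boxR 1 y * ennreal (\<bar>u \<bullet> y\<bar> powr c') *
       (\<integral>\<^sup>+z. boxR 1 z * ennreal (\<bar>y \<bullet> z\<bar> powr a') * ennreal (\<bar>z \<bullet> u\<bar> powr b') \<partial>lborel)"
      proof (cases "y \<in> B0")
        case False then show ?thesis by simp
      next
        case True
        have "L1 a b c u (nrm y) \<le> (\<integral>\<^sup>+z. ennreal (\<bar>u \<bullet> y\<bar> powr c') * (boxR 1 z * ennreal (\<bar>y \<bullet> z\<bar> powr a') * ennreal (\<bar>z \<bullet> u\<bar> powr b')) \<partial>lborel)"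
          unfolding L1_def
        proof (rule nn_integral_mono)
          fix z :: "real^'n"
          show "indicator B0 z * R3 a b c (u, nrm y, nrm z) \<le> ennreal (\<bar>u \<bullet> y\<bar> powr c') * (boxR 1 z * ennreal (\<bar>y \<bullet> z\<bar> powr a') * ennreal (\<bar>z \<bullet> u\<bar> powr b'))"
          proof (cases "z \<in> B0")
            case False then show ?thesis by simp
          next
            case zB: True
            have "R3 a b c (u, nrm y, nrm z) \<le> ennreal (\<bar>u \<bullet> y\<bar> powr c') * (ennreal (\<bar>y \<bullet> z\<bar> powr a') * ennreal (\<bar>z \<bullet> u\<bar> powr b'))"
              by (rule hat_bound[OF u True zB a'_def b'_def c'_def])
            moreover have "indicator B0 z = (1::ennreal)" "boxR 1 z = 1"
              using zB boxR_B0[of z] by auto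
            ultimately show ?thesis by (simp add: mult_ac)
          qed
        qed
        also have "\<dots> = ennreal (\<bar>u \<bullet> y\<bar> powr c') * (\<integral>\<^sup>+z. boxR 1 z * ennreal (\<bar>y \<bullet> z\<bar> powr a') * ennreal (\<bar>z \<bullet> u\<bar> powr b') \<partial>lborel)"
          by (rule nn_integral_cmult) measurable
        finally have "L1 a b c u (nrm y) \<le> ennreal (\<bar>u \<bullet> y\<bar> powr c') * (\<integral>\<^sup>+z. boxR 1 z * ennreal (\<bar>y \<bullet> z\<bar> powr a') * ennreal (\<bar>z \<bullet> u\<bar> powr b') \<partial>lborel)" .
        moreover have "indicator B0 y = (1::ennreal)" "boxR 1 y = 1"
          using True boxR_B0[of y] by auto
        ultimately show ?thesis by (simp add: mult_ac)
      qed
    qed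
    also have "\<dots> \<le> C" by (rule C(2)[OF u])
    finally show ?thesis unfolding u_def .
  qed
  have "(\<integral>\<^sup>+(x::real^'n). indicator B0 x * L2 a b c (nrm x) \<partial>lborel) \<le> (\<integral>\<^sup>+(x::real^'n). C * indicator B0 x \<partial>lborel)"
    using L2b by (intro nn_integral_mono) (auto simp: indicator_def)
  also have "\<dots> = C * emeasure lborel (B0 :: (real^'n) set)"
    by (rule nn_integral_cmult_indicator) simp
  also have "\<dots> < \<infinity>"
  proof -
    have "emeasure lborel (B0 :: (real^'n) set) \<le> emeasure lborel (ball (0::real^'n) 1)"
      by (rule emeasure_mono) auto
    then have "emeasure lborel (B0 :: (real^'n) set) < \<infinity>"
      using emeasure_lborel_ball_finite[of "0::real^'n" 1] by (simp add: order_le_less_trans)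
    then show ?thesis using C(1) by (simp add: ennreal_mult_less_top)
  qed
  finally have "(\<integral>\<^sup>+(x::real^'n). indicator B0 x * L2 a b c (nrm x) \<partial>lborel) < \<infinity>" .
  then show ?thesis unfolding iter3_R3 by (simp add: ennreal_mult_less_top)
qed

lemma inner_perturb:
  fixes v w p q :: "'a::real_inner"
  shows "\<bar>v \<bullet> w - p \<bullet> q\<bar> \<le> norm (v - p) * norm w + norm p * norm (w - q)"
proof -
  have "v \<bullet> w - p \<bullet> q = (v - p) \<bullet> w + p \<bullet> (w - q)" by (simp add: algebra_simps)
  then have "\<bar>v \<bullet> w - p \<bullet> q\<bar> \<le> \<bar>(v - p) \<bullet> w\<bar> + \<bar>p \<bullet> (w - q)\<bar>" by simp
  also have "\<dots> \<le> norm (v - p) * norm w + norm p * norm (w - q)"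
    by (intro add_mono Cauchy_Schwarz_ineq2)
  finally show ?thesis .
qed

lemma kappa_bound:
  fixes s b :: real assumes "1/5 \<le> s" "s \<le> 1"
  shows "min ((1/5) powr b) 1 \<le> s powr b"
proof (cases "b \<ge> 0")
  case True
  then have "(1/5) powr b \<le> s powr b" using assms by (intro powr_mono2) auto
  then show ?thesis by simp
next
  case False
  then have "1 powr b \<le> s powr b" using assms by (intro powr_mono2') auto
  then show ?thesis by simp
qed

lemma emeasure_cball_pos: "r > 0 \<Longrightarrow> emeasure lborel (cball (c::'a::euclidean_space) r) > 0"
  by (simp add: emeasure_cball)

lemma norm_sum_le_coords:
  fixes f :: "'a::euclidean_space \<Rightarrow> real"
  shows "norm (\<Sum>c\<in>A. f c *\<^sub>R c) \<le> (\<Sum>c\<in>A. \<bar>f c\<bar> * norm c)"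
  by (rule order_trans[OF norm_sum]) simp

lemma div_z:
  fixes e1 e2 y :: "real^'n::finite" and a :: real
  assumes e1: "e1 \<in> Basis" and e2: "e2 \<in> Basis" and e12: "e2 \<noteq> e1" and a: "a \<le> -1"
    and y: "y \<in> cball ((13/20) *\<^sub>R e1) (1/200)"
  shows "(\<integral>\<^sup>+z. indicator (cball ((13/20) *\<^sub>R e2) (1/20)) z * ennreal (\<bar>y \<bullet> z\<bar> powr a) \<partial>lborel) = \<infinity>"
proof -
  interpret product_sigma_finite "\<lambda>_::real^'n. lborel :: real measure" by standard
  define py where "py = (13/20) *\<^sub>R e1"
  define pz where "pz = (13/20) *\<^sub>R e2"
  define Z where "Z = cball pz (1/20)"
  have [measurable]: "Z \<in> sets borel" unfolding Z_def by simp
  define N where "N = real CARD('n)"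
  have N: "N \<ge> 1" unfolding N_def by (simp add: Suc_le_eq)
  define \<eta> where "\<eta> = 1 / (200 * N)"
  have \<eta>: "\<eta> > 0" using N unfolding \<eta>_def by simp
  define S where "S \<omega> = (\<Sum>c\<in>Basis-{e1}. \<omega> c *\<^sub>R c)" for \<omega> :: "real^'n \<Rightarrow> real"
  have [measurable]: "S \<in> borel_measurable (Pi\<^sub>M (Basis-{e1}) (\<lambda>_. lborel))"
    unfolding S_def by measurable
  define W where "W = Pi\<^sub>E (Basis-{e1}) (\<lambda>c. {pz \<bullet> c - \<eta> .. pz \<bullet> c + \<eta>})"
  have Wsets: "W \<in> sets (Pi\<^sub>M (Basis-{e1}) (\<lambda>_. lborel))"
    unfolding W_def by (intro sets_PiM_I_finite) auto
  have inner_inf: "(\<integral>\<^sup>+t. indicator Z (t *\<^sub>R e1 + S \<omega>) * ennreal (\<bar>y \<bullet> (t *\<^sub>R e1 + S \<omega>)\<bar> powr a) \<partial>lborel) = \<infinity>"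
    if \<omega>: "\<omega> \<in> W" for \<omega>
  proof -
    have pzrep: "pz = (\<Sum>c\<in>Basis-{e1}. (pz \<bullet> c) *\<^sub>R c)"
    proof -
      have "pz = (\<Sum>c\<in>Basis. (pz \<bullet> c) *\<^sub>R c)" by (simp add: euclidean_representation)
      also have "\<dots> = (pz \<bullet> e1) *\<^sub>R e1 + (\<Sum>c\<in>Basis-{e1}. (pz \<bullet> c) *\<^sub>R c)"
        by (rule sum.remove[OF finite_Basis e1])
      also have "pz \<bullet> e1 = 0" unfolding pz_def using e1 e2 e12 by (simp add: inner_Basis)
      finally show ?thesis by simp
    qed
    have Sclose: "norm (S \<omega> - pz) \<le> 1/200"
    proof -
      have "S \<omega> - pz = (\<Sum>c\<in>Basis-{e1}. (\<omega> c - pz \<bullet> c) *\<^sub>R c)"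
        unfolding S_def by (subst pzrep) (simp add: sum_subtractf scaleR_diff_left)
      also have "norm \<dots> \<le> (\<Sum>c\<in>Basis-{e1}. \<bar>\<omega> c - pz \<bullet> c\<bar> * norm c)" by (rule norm_sum_le_coords)
      also have "\<dots> \<le> (\<Sum>c\<in>Basis-{e1}. \<eta>)"
      proof (rule sum_mono)
        fix c assume c: "c \<in> Basis - {e1}"
        then have "\<omega> c \<in> {pz \<bullet> c - \<eta> .. pz \<bullet> c + \<eta>}" using PiE_mem[OF \<omega>[unfolded W_def] c] by simp
        then show "\<bar>\<omega> c - pz \<bullet> c\<bar> * norm c \<le> \<eta>" using c by auto
      qed
      also have "\<dots> = real (CARD('n) - 1) * \<eta>" using e1 by (simp add: card_Diff_singleton)
      also have "\<dots> \<le> N * \<eta>" using \<eta> unfolding N_def by (intro mult_right_mono) auto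
      also have "N * \<eta> = 1/200" unfolding \<eta>_def using N by simp
      finally show ?thesis .
    qed
    have ny: "norm (y - py) \<le> 1/200" using y unfolding py_def by (simp add: dist_norm norm_minus_commute)
    have npy: "norm py = 13/20" unfolding py_def using e1 by simp
    have npz: "norm pz = 13/20" unfolding pz_def using e2 by simp
    have nS: "norm (S \<omega>) \<le> 131/200"
      using norm_triangle_ineq[of "S \<omega> - pz" pz] Sclose npz by simp
    define s where "s = y \<bullet> e1"
    have s: "s \<ge> 3/5"
    proof -
      have "\<bar>y \<bullet> e1 - py \<bullet> e1\<bar> \<le> norm (y - py) * norm e1 + norm py * norm (e1 - e1)" by (rule inner_perturb)
      moreover have "py \<bullet> e1 = 13/20" unfolding py_def using e1 by simp
      ultimately show ?thesis using ny e1 unfolding s_def by simp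
    qed
    define q where "q = y \<bullet> S \<omega>"
    have q: "\<bar>q\<bar> \<le> 7/1000"
    proof -
      have "\<bar>y \<bullet> S \<omega> - py \<bullet> pz\<bar> \<le> norm (y - py) * norm (S \<omega>) + norm py * norm (S \<omega> - pz)" by (rule inner_perturb)
      moreover have "py \<bullet> pz = 0" unfolding py_def pz_def using e1 e2 e12 by (simp add: inner_Basis)
      moreover have "norm (y - py) * norm (S \<omega>) \<le> 1/200 * (131/200)" using ny nS by (intro mult_mono) auto
      moreover have "norm py * norm (S \<omega> - pz) \<le> 13/20 * (1/200)" unfolding npy using Sclose by (intro mult_left_mono) auto
      ultimately show ?thesis unfolding q_def by simp
    qed
    define t0 where "t0 = - q / s"
    have t0: "\<bar>t0\<bar> \<le> 7/600"
    proof -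
      have "\<bar>t0\<bar> = \<bar>q\<bar> / s" unfolding t0_def using s by simp
      also have "\<dots> \<le> (7/1000) / (3/5)" using q s by (intro frac_le) auto
      finally show ?thesis by simp
    qed
    have yz: "y \<bullet> (t *\<^sub>R e1 + S \<omega>) = s * (t - t0)" for t
    proof -
      have "y \<bullet> (t *\<^sub>R e1 + S \<omega>) = t * s + q" by (simp add: s_def q_def inner_add_right)
      moreover have "s * (t - t0) = t * s + q" using s by (simp add: t0_def field_simps)
      ultimately show ?thesis by simp
    qed
    have inZ: "t *\<^sub>R e1 + S \<omega> \<in> Z" if "t \<in> {t0 - 1/100 .. t0 + 1/100}" for t
    proof -
      have tt: "\<bar>t\<bar> \<le> 7/600 + 1/100" using that t0 by auto
      have "norm (t *\<^sub>R e1 + S \<omega> - pz) \<le> norm (t *\<^sub>R e1) + norm (S \<omega> - pz)"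
        using norm_triangle_ineq[of "t *\<^sub>R e1" "S \<omega> - pz"] by (simp add: algebra_simps)
      also have "\<dots> \<le> (7/600 + 1/100) + 1/200" using tt Sclose e1 by simp
      finally show ?thesis unfolding Z_def by (simp add: dist_norm norm_minus_commute)
    qed
    have D: "(\<integral>\<^sup>+t. indicator {t0 - 1/100 .. t0 + 1/100} t * ennreal (\<bar>t - t0\<bar> powr a) \<partial>lborel) = \<infinity>"
      by (rule nn_pow_diverge[OF a]) simp
    have sp: "ennreal (s powr a) \<noteq> 0" using s by simp
    have "\<infinity> = ennreal (s powr a) * (\<integral>\<^sup>+t. indicator {t0 - 1/100 .. t0 + 1/100} t * ennreal (\<bar>t - t0\<bar> powr a) \<partial>lborel)"
      unfolding D using sp by (simp add: ennreal_mult_top)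
    also have "\<dots> = (\<integral>\<^sup>+t. ennreal (s powr a) * (indicator {t0 - 1/100 .. t0 + 1/100} t * ennreal (\<bar>t - t0\<bar> powr a)) \<partial>lborel)"
      by (rule nn_integral_cmult[symmetric]) measurable
    also have "\<dots> \<le> (\<integral>\<^sup>+t. indicator Z (t *\<^sub>R e1 + S \<omega>) * ennreal (\<bar>y \<bullet> (t *\<^sub>R e1 + S \<omega>)\<bar> powr a) \<partial>lborel)"
    proof (rule nn_integral_mono)
      fix t
      show "ennreal (s powr a) * (indicator {t0 - 1/100 .. t0 + 1/100} t * ennreal (\<bar>t - t0\<bar> powr a))
          \<le> indicator Z (t *\<^sub>R e1 + S \<omega>) * ennreal (\<bar>y \<bullet> (t *\<^sub>R e1 + S \<omega>)\<bar> powr a)"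
      proof (cases "t \<in> {t0 - 1/100 .. t0 + 1/100}")
        case True
        have eq: "\<bar>y \<bullet> (t *\<^sub>R e1 + S \<omega>)\<bar> powr a = s powr a * \<bar>t - t0\<bar> powr a"
        proof -
          have "\<bar>y \<bullet> (t *\<^sub>R e1 + S \<omega>)\<bar> = s * \<bar>t - t0\<bar>" unfolding yz using s by (simp add: abs_mult)
          then show ?thesis using s by (simp add: powr_mult)
        qed
        have i1: "indicator {t0 - 1/100 .. t0 + 1/100} t = (1::ennreal)" using True by simp
        have i2: "indicator Z (t *\<^sub>R e1 + S \<omega>) = (1::ennreal)" using inZ[OF True] by simp
        show ?thesis unfolding i1 i2 eq by (simp add: ennreal_mult)
      qed simp
    qed
    finally show ?thesis by (simp add: top_unique)
  qed
  have "(\<integral>\<^sup>+z. indicator Z z * ennreal (\<bar>y \<bullet> z\<bar> powr a) \<partial>lborel)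
     = (\<integral>\<^sup>+\<omega>. (\<integral>\<^sup>+t. indicator Z (t *\<^sub>R e1 + S \<omega>) * ennreal (\<bar>y \<bullet> (t *\<^sub>R e1 + S \<omega>)\<bar> powr a) \<partial>lborel) \<partial>(Pi\<^sub>M (Basis-{e1}) (\<lambda>_. lborel)))"
    unfolding S_def by (rule nn_integral_peel[OF e1]) measurable
  also have "\<dots> \<ge> (\<integral>\<^sup>+\<omega>. \<infinity> * indicator W \<omega> \<partial>(Pi\<^sub>M (Basis-{e1}) (\<lambda>_. lborel)))"
    using inner_inf by (intro nn_integral_mono) (auto simp: indicator_def)
  moreover have "(\<integral>\<^sup>+\<omega>. \<infinity> * indicator W \<omega> \<partial>(Pi\<^sub>M (Basis-{e1}) (\<lambda>_. lborel))) = \<infinity> * emeasure (Pi\<^sub>M (Basis-{e1}) (\<lambda>_. lborel)) W"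
    by (rule nn_integral_cmult_indicator[OF Wsets])
  moreover have "emeasure (Pi\<^sub>M (Basis-{e1}) (\<lambda>_. lborel)) W = (\<Prod>c\<in>Basis-{e1}. emeasure lborel {pz \<bullet> c - \<eta> .. pz \<bullet> c + \<eta>})"
    unfolding W_def by (rule emeasure_PiM) auto
  moreover have "(\<Prod>c\<in>Basis-{e1}. emeasure lborel {pz \<bullet> c - \<eta> .. pz \<bullet> c + \<eta>}) \<noteq> 0"
    using \<eta> by simp
  ultimately show ?thesis unfolding Z_def pz_def
    by (simp add: ennreal_top_mult top_unique)
qed

lemma pt_lower:
  fixes e1 e2 x y z :: "real^'n::finite" and a b c :: real
  assumes e1: "e1 \<in> Basis" and e2: "e2 \<in> Basis" and e12: "e2 \<noteq> e1" and a: "a \<le> 0"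
    and x: "x \<in> cball ((9/20) *\<^sub>R (e1 + e2)) (1/20)"
    and y: "y \<in> cball ((13/20) *\<^sub>R e1) (1/200)"
    and z: "z \<in> cball ((13/20) *\<^sub>R e2) (1/20)"
  shows "ennreal (4 powr a * min ((1/5) powr b) 1 * min ((1/5) powr c) 1) * ennreal (\<bar>y \<bullet> z\<bar> powr a)
      \<le> R3 a b c (nrm x, nrm y, nrm z)"
    and "x \<in> B0" "y \<in> B0" "z \<in> B0"
proof -
  define px where "px = (9/20) *\<^sub>R (e1 + e2)"
  define py where "py = (13/20) *\<^sub>R e1"
  define pz where "pz = (13/20) *\<^sub>R e2"
  have ee: "e1 \<bullet> e1 = 1" "e2 \<bullet> e2 = 1" "e1 \<bullet> e2 = 0" "e2 \<bullet> e1 = 0"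
    using e1 e2 e12 by (auto simp: inner_Basis)
  have n1: "norm e1 = 1" "norm e2 = 1" using e1 e2 by auto
  have pxpx: "(norm px)^2 = 81/200"
    unfolding power2_norm_eq_inner px_def by (simp add: inner_add_left inner_add_right ee)
  have npx: "norm px \<le> 13/20"
  proof (rule ccontr)
    assume "\<not> ?thesis" then have "13/20 < norm px" by simp
    then have "(13/20)^2 < (norm px)^2" by (intro power_strict_mono) auto
    then show False using pxpx by (simp add: power2_eq_square)
  qed
  have npx2: "3/5 \<le> norm px"
  proof (rule ccontr)
    assume "\<not> ?thesis" then have "norm px < 3/5" by simp
    then have "(norm px)^2 < (3/5)^2" by (intro power_strict_mono) auto
    then show False using pxpx by (simp add: power2_eq_square)
  qed
  have npy: "norm py = 13/20" unfolding py_def using n1 by simp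
  have npz: "norm pz = 13/20" unfolding pz_def using n1 by simp
  have pxpy: "px \<bullet> py = 117/400" unfolding px_def py_def by (simp add: inner_add_left ee)
  have pxpz: "px \<bullet> pz = 117/400" unfolding px_def pz_def by (simp add: inner_add_left ee)
  have dx: "norm (x - px) \<le> 1/20" using x unfolding px_def by (simp add: dist_norm norm_minus_commute)
  have dy: "norm (y - py) \<le> 1/200" using y unfolding py_def by (simp add: dist_norm norm_minus_commute)
  have dz: "norm (z - pz) \<le> 1/20" using z unfolding pz_def by (simp add: dist_norm norm_minus_commute)
  have tri: "norm p - norm (v - p) \<le> norm v" "norm v \<le> norm p + norm (v - p)" for v p :: "real^'n"
    using norm_triangle_ineq2[of p v] norm_triangle_ineq[of p "v - p"] by (auto simp: norm_minus_commute)
  have nx: "11/20 \<le> norm x" "norm x \<le> 7/10" using tri[where v=x and p=px] dx npx npx2 by linarith+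
  have ny: "129/200 \<le> norm y" "norm y \<le> 131/200" using tri[where v=y and p=py] dy npy by linarith+
  have nz: "3/5 \<le> norm z" "norm z \<le> 7/10" using tri[where v=z and p=pz] dz npz by linarith+
  show "x \<in> B0" "y \<in> B0" "z \<in> B0" using nx ny nz by auto
  have xy: "x \<bullet> y \<ge> 1/5"
  proof -
    have "\<bar>x \<bullet> y - px \<bullet> py\<bar> \<le> norm (x - px) * norm y + norm px * norm (y - py)" by (rule inner_perturb)
    moreover have "norm (x - px) * norm y \<le> 1/20 * (131/200)" using dx ny by (intro mult_mono) auto
    moreover have "norm px * norm (y - py) \<le> 13/20 * (1/200)" using npx dy by (intro mult_mono) auto
    ultimately show ?thesis using pxpy by linarith
  qed
  have xz: "z \<bullet> x \<ge> 1/5"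
  proof -
    have "\<bar>x \<bullet> z - px \<bullet> pz\<bar> \<le> norm (x - px) * norm z + norm px * norm (z - pz)" by (rule inner_perturb)
    moreover have "norm (x - px) * norm z \<le> 1/20 * (7/10)" using dx nz by (intro mult_mono) auto
    moreover have "norm px * norm (z - pz) \<le> 13/20 * (1/20)" using npx dz by (intro mult_mono) auto
    ultimately show ?thesis using pxpz by (simp add: inner_commute)
  qed
  have nxy: "0 < norm x * norm y" "norm x * norm y \<le> 1"
    using nx ny by (intro mult_pos_pos mult_le_one; linarith)+
  have nxz: "0 < norm z * norm x" "norm z * norm x \<le> 1"
    using nx nz by (intro mult_pos_pos mult_le_one; linarith)+
  have nyz: "1/4 \<le> norm y * norm z"
  proof -
    have "(129/200) * (3/5) \<le> norm y * norm z" using ny nz by (intro mult_mono) auto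
    then show ?thesis by simp
  qed
  have ux: "norm (nrm x) = 1" "norm (nrm y) = 1" "norm (nrm z) = 1" using nx ny nz by (auto intro: norm_nrm)
  have K1: "min ((1/5) powr b) 1 \<le> \<bar>nrm z \<bullet> nrm x\<bar> powr b"
  proof (rule kappa_bound)
    have "\<bar>nrm z \<bullet> nrm x\<bar> = \<bar>z \<bullet> x\<bar> / (norm z * norm x)" by (simp add: nrm_inner_left nrm_inner_right abs_mult)
    also have "\<dots> \<ge> \<bar>z \<bullet> x\<bar>" using nxz by (simp add: le_divide_eq mult_left_le)
    finally show "1/5 \<le> \<bar>nrm z \<bullet> nrm x\<bar>" using xz by linarith
    show "\<bar>nrm z \<bullet> nrm x\<bar> \<le> 1" using ux by (intro abs_inner_unit)
  qed
  have K2: "min ((1/5) powr c) 1 \<le> \<bar>nrm x \<bullet> nrm y\<bar> powr c"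
  proof (rule kappa_bound)
    have "\<bar>nrm x \<bullet> nrm y\<bar> = \<bar>x \<bullet> y\<bar> / (norm x * norm y)" by (simp add: nrm_inner_left nrm_inner_right abs_mult)
    also have "\<dots> \<ge> \<bar>x \<bullet> y\<bar>" using nxy by (simp add: le_divide_eq mult_left_le)
    finally show "1/5 \<le> \<bar>nrm x \<bullet> nrm y\<bar>" using xy by linarith
    show "\<bar>nrm x \<bullet> nrm y\<bar> \<le> 1" using ux by (intro abs_inner_unit)
  qed
  have K3: "4 powr a * \<bar>y \<bullet> z\<bar> powr a \<le> \<bar>nrm y \<bullet> nrm z\<bar> powr a"
  proof (cases "y \<bullet> z = 0")
    case True then show ?thesis by (simp add: nrm_inner_left nrm_inner_right)
  next
    case False
    have e: "\<bar>nrm y \<bullet> nrm z\<bar> = \<bar>y \<bullet> z\<bar> / (norm y * norm z)" by (simp add: nrm_inner_left nrm_inner_right abs_mult)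
    have "\<bar>y \<bullet> z\<bar> / (norm y * norm z) \<le> 4 * \<bar>y \<bullet> z\<bar>"
    proof -
      have pos: "0 < norm y * norm z" using nyz by linarith
      have "\<bar>y \<bullet> z\<bar> * 1 \<le> \<bar>y \<bullet> z\<bar> * (4 * (norm y * norm z))"
        using nyz by (intro mult_left_mono) auto
      then have "\<bar>y \<bullet> z\<bar> \<le> 4 * \<bar>y \<bullet> z\<bar> * (norm y * norm z)" by (simp add: mult_ac)
      then show ?thesis using pos by (simp add: pos_divide_le_eq)
    qed
    then have "(4 * \<bar>y \<bullet> z\<bar>) powr a \<le> (\<bar>y \<bullet> z\<bar> / (norm y * norm z)) powr a"
      using a False nyz by (intro powr_mono2') auto
    then show ?thesis unfolding e by (simp add: powr_mult)
  qed
  have "ennreal (4 powr a * min ((1/5) powr b) 1 * min ((1/5) powr c) 1) * ennreal (\<bar>y \<bullet> z\<bar> powr a)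
      = ennreal (4 powr a * \<bar>y \<bullet> z\<bar> powr a) * ennreal (min ((1/5) powr b) 1) * ennreal (min ((1/5) powr c) 1)"
    by (simp add: ennreal_mult'[symmetric] mult_ac)
  also have "\<dots> \<le> ennreal (\<bar>nrm y \<bullet> nrm z\<bar> powr a) * ennreal (\<bar>nrm z \<bullet> nrm x\<bar> powr b) * ennreal (\<bar>nrm x \<bullet> nrm y\<bar> powr c)"
    using K1 K2 K3 by (intro mult_mono ennreal_leI) auto
  also have "\<dots> = R3 a b c (nrm x, nrm y, nrm z)" by (simp add: R3_simp)
  finally show "ennreal (4 powr a * min ((1/5) powr b) 1 * min ((1/5) powr c) 1) * ennreal (\<bar>y \<bullet> z\<bar> powr a)
      \<le> R3 a b c (nrm x, nrm y, nrm z)" .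
qed

lemma lower_inf:
  fixes a b c :: real
  assumes n2: "CARD('n::finite) \<ge> 2" and a: "a \<le> -1"
  shows "iter3 (R3 a b c :: (real^'n) \<times> _ \<Rightarrow> _) = \<infinity>"
proof -
  obtain e1 :: "real^'n" where e1: "e1 \<in> Basis" using nonempty_Basis by blast
  have dim: "DIM(real^'n) \<ge> 2" using n2 by simp
  obtain e2 :: "real^'n" where e2: "e2 \<in> Basis" "e2 \<noteq> e1" using exists_other_basis[OF dim e1] by blast
  define X where "X = cball ((9/20) *\<^sub>R (e1 + e2)) (1/20 :: real)"
  define Y where "Y = cball ((13/20) *\<^sub>R e1) (1/200 :: real)"
  define Z where "Z = cball ((13/20) *\<^sub>R e2) (1/20 :: real)"
  have [measurable]: "Z \<in> sets borel" unfolding Z_def by simp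
  define \<kappa> where "\<kappa> = ennreal (4 powr a * min ((1/5) powr b) 1 * min ((1/5) powr c) 1)"
  have \<kappa>: "\<kappa> \<noteq> 0" unfolding \<kappa>_def by (simp add: min_def)
  have a0: "a \<le> 0" using a by simp
  have L1i: "L1 a b c (nrm x) (nrm y) = \<infinity>" if x: "x \<in> X" and y: "y \<in> Y" for x y
  proof -
    have "\<infinity> = \<kappa> * (\<integral>\<^sup>+z. indicator Z z * ennreal (\<bar>y \<bullet> z\<bar> powr a) \<partial>lborel)"
      using div_z[OF e1 e2(1) e2(2) a y[unfolded Y_def]] \<kappa> unfolding Z_def by (simp add: ennreal_mult_top)
    also have "\<dots> = (\<integral>\<^sup>+z. \<kappa> * (indicator Z z * ennreal (\<bar>y \<bullet> z\<bar> powr a)) \<partial>lborel)"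
      by (rule nn_integral_cmult[symmetric]) measurable
    also have "\<dots> \<le> L1 a b c (nrm x) (nrm y)"
      unfolding L1_def
    proof (rule nn_integral_mono)
      fix z :: "real^'n"
      show "\<kappa> * (indicator Z z * ennreal (\<bar>y \<bullet> z\<bar> powr a)) \<le> indicator B0 z * R3 a b c (nrm x, nrm y, nrm z)"
      proof (cases "z \<in> Z")
        case True
        note P1 = pt_lower(1)[OF e1 e2(1) e2(2) a0 x[unfolded X_def] y[unfolded Y_def] True[unfolded Z_def], of b c]
        note P4 = pt_lower(4)[OF e1 e2(1) e2(2) a0 x[unfolded X_def] y[unfolded Y_def] True[unfolded Z_def]]
        have "indicator B0 z = (1::ennreal)" using P4 by simp
        then show ?thesis using True P1 unfolding \<kappa>_def by simp
      qed simp
    qed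
    finally show ?thesis by (simp add: top_unique)
  qed
  have L2i: "L2 a b c (nrm x) = \<infinity>" if x: "x \<in> X" for x
  proof -
    have "\<infinity> = \<infinity> * emeasure lborel Y"
      unfolding Y_def using emeasure_cball_pos[of "1/200" "(13/20) *\<^sub>R e1"] by (simp add: ennreal_top_mult)
    also have "\<dots> = (\<integral>\<^sup>+y. \<infinity> * indicator Y y \<partial>lborel)"
      by (rule nn_integral_cmult_indicator[symmetric]) (simp add: Y_def)
    also have "\<dots> \<le> L2 a b c (nrm x)"
      unfolding L2_def
    proof (rule nn_integral_mono)
      fix y :: "real^'n"
      show "\<infinity> * indicator Y y \<le> indicator B0 y * L1 a b c (nrm x) (nrm y)"
      proof (cases "y \<in> Y")
        case True
        have "y \<in> B0" using pt_lower(3)[OF e1 e2(1) e2(2) a0 x[unfolded X_def] True[unfolded Y_def], of "(13/20) *\<^sub>R e2"] by simp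
        then show ?thesis using True L1i[OF x True] by simp
      qed simp
    qed
    finally show ?thesis by (simp add: top_unique)
  qed
  have "\<infinity> = \<infinity> * emeasure lborel X"
    unfolding X_def using emeasure_cball_pos[of "1/20" "(9/20) *\<^sub>R (e1 + e2)"] by (simp add: ennreal_top_mult)
  also have "\<dots> = (\<integral>\<^sup>+x. \<infinity> * indicator X x \<partial>lborel)"
    by (rule nn_integral_cmult_indicator[symmetric]) (simp add: X_def)
  also have "\<dots> \<le> (\<integral>\<^sup>+(x::real^'n). indicator B0 x * L2 a b c (nrm x) \<partial>lborel)"
  proof (rule nn_integral_mono)
    fix x :: "real^'n"
    show "\<infinity> * indicator X x \<le> indicator B0 x * L2 a b c (nrm x)"
    proof (cases "x \<in> X")
      case True
      have "x \<in> B0" using pt_lower(2)[OF e1 e2(1) e2(2) a0 True[unfolded X_def], of "(13/20) *\<^sub>R e1" "(13/20) *\<^sub>R e2"] by simp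
      then show ?thesis using True L2i[OF True] by simp
    qed simp
  qed
  finally have "(\<integral>\<^sup>+(x::real^'n). indicator B0 x * L2 a b c (nrm x) \<partial>lborel) = \<infinity>" by (simp add: top_unique)
  then show ?thesis unfolding iter3_R3 by (simp add: ennreal_mult_top)
qed

lemma cpow_real_eq:
  fixes r :: real and l :: complex
  assumes "r \<ge> 0"
  shows "complex_of_real r powr l = (if r = 0 then 0 else exp (l * complex_of_real (ln r)))"
  using assms by (auto simp: powr_def Ln_of_real)

lemma h_meas_borel: "(\<lambda>p. h_lambda l1 l2 l3 (fst p) (fst (snd p)) (snd (snd p))) \<in> borel_measurable (borel \<Otimes>\<^sub>M borel \<Otimes>\<^sub>M (borel :: (real^'n::finite) measure))"
  unfolding h_lambda_def cpow_real_eq[OF abs_ge_zero] by measurable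

lemma norm_h: "ennreal (norm (h_lambda l1 l2 l3 x y z)) = R3 (Re l1) (Re l2) (Re l3) (x, y, z)"
proof -
  have n: "norm (complex_of_real \<bar>r\<bar> powr l) = \<bar>r\<bar> powr Re l" for r :: real and l :: complex
    by (subst norm_powr_real_powr) auto
  show ?thesis unfolding h_lambda_def R3_simp
    by (simp add: norm_mult n ennreal_mult)
qed

lemma R3_perm1_meas: "(\<lambda>p. R3 a b c (fst (snd p), fst p, snd (snd p))) \<in> borel_measurable (borel :: ((real^'n::finite) \<times> (real^'n) \<times> (real^'n)) measure)"
proof -
  have "(\<lambda>p. R3 a b c (fst (snd p), fst p, snd (snd p))) \<in> borel_measurable (borel \<Otimes>\<^sub>M borel \<Otimes>\<^sub>M (borel :: (real^'n) measure))"
    unfolding R3_def by measurable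
  then show ?thesis by (simp add: borel_prod)
qed

lemma iter3_sym_b:
  "iter3 (R3 a b c :: (real^'n::finite) \<times> _ \<Rightarrow> _) = iter3 (R3 b a c :: (real^'n) \<times> _ \<Rightarrow> _)"
proof -
  have "iter3 (R3 b a c :: (real^'n) \<times> _ \<Rightarrow> _) = iter3 (\<lambda>(x::real^'n,y,z). R3 b a c (y, x, z))"
    by (rule iter3_swap_xy) (rule R3_meas)
  also have "(\<lambda>(x::real^'n,y,z). R3 b a c (y, x, z)) = (R3 a b c :: (real^'n) \<times> _ \<Rightarrow> _)"
    by (auto simp: R3_simp mult_ac inner_commute)
  finally show ?thesis by (rule sym)
qed

lemma iter3_sym_c:
  "iter3 (R3 a b c :: (real^'n::finite) \<times> _ \<Rightarrow> _) = iter3 (R3 c a b :: (real^'n) \<times> _ \<Rightarrow> _)"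
proof -
  define G :: "(real^'n) \<times> (real^'n) \<times> (real^'n) \<Rightarrow> ennreal" where "G p = R3 c a b (fst (snd p), fst p, snd (snd p))" for p
  have Gm: "G \<in> borel_measurable borel" unfolding G_def by (rule R3_perm1_meas)
  have "iter3 (R3 c a b :: (real^'n) \<times> _ \<Rightarrow> _) = iter3 (\<lambda>(x::real^'n,y,z). R3 c a b (y, x, z))"
    by (rule iter3_swap_xy) (rule R3_meas)
  also have "(\<lambda>(x::real^'n,y,z). R3 c a b (y, x, z)) = G" unfolding G_def by auto
  also have "iter3 G = iter3 (\<lambda>(x,y,z). G (x, z, y))" by (rule iter3_swap_yz[OF Gm])
  also have "(\<lambda>(x,y,z). G (x, z, y)) = (R3 a b c :: (real^'n) \<times> _ \<Rightarrow> _)"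
    unfolding G_def by (auto simp: R3_simp mult_ac inner_commute)
  finally show ?thesis by (rule sym)
qed

theorem proposition6p7:
  fixes l1 l2 l3 :: complex
  assumes "CARD('n::finite) \<ge> 2"
  shows "integrable (sphere_measure \<Otimes>\<^sub>M sphere_measure \<Otimes>\<^sub>M (sphere_measure :: (real ^ 'n) measure))
           (\<lambda>(x, y, z). h_lambda l1 l2 l3 x y z)
         \<longleftrightarrow> (Re l1 > -1 \<and> Re l2 > -1 \<and> Re l3 > -1)"
proof -
  define a where "a = Re l1"
  define b where "b = Re l2"
  define c where "c = Re l3"
  let ?M = "sphere_measure \<Otimes>\<^sub>M sphere_measure \<Otimes>\<^sub>M (sphere_measure :: (real ^ 'n) measure)"
  have idm: "(\<lambda>p. (fst p, fst (snd p), snd (snd p))) \<in> measurable ?M (borel \<Otimes>\<^sub>M borel \<Otimes>\<^sub>M borel)"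
  proof -
    note id_sphere_meas[measurable]
    show ?thesis by measurable
  qed
  have meas: "(\<lambda>(x, y, z). h_lambda l1 l2 l3 x y z) \<in> borel_measurable ?M"
  proof -
    have "(\<lambda>p. h_lambda l1 l2 l3 (fst p) (fst (snd p)) (snd (snd p))) \<in> borel_measurable ?M"
      using measurable_compose[OF idm h_meas_borel] by simp
    then show ?thesis by (simp add: split_beta')
  qed
  have nn: "(\<integral>\<^sup>+p. ennreal (norm ((\<lambda>(x, y, z). h_lambda l1 l2 l3 x y z) p)) \<partial>?M) = iter3 (R3 a b c :: (real^'n) \<times> _ \<Rightarrow> _)"
  proof -
    have "(\<integral>\<^sup>+p. ennreal (norm ((\<lambda>(x, y, z). h_lambda l1 l2 l3 x y z) p)) \<partial>?M) = (\<integral>\<^sup>+p. (R3 a b c :: (real^'n) \<times> _ \<Rightarrow> _) p \<partial>?M)"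
      by (intro nn_integral_cong) (auto simp: norm_h a_def b_def c_def split: prod.splits)
    also have "\<dots> = iter3 (R3 a b c :: (real^'n) \<times> _ \<Rightarrow> _)" by (rule prod_eq_iter3) (rule R3_meas)
    finally show ?thesis .
  qed
  have int_iff: "integrable ?M (\<lambda>(x, y, z). h_lambda l1 l2 l3 x y z) \<longleftrightarrow> iter3 (R3 a b c :: (real^'n) \<times> _ \<Rightarrow> _) < \<infinity>"
    unfolding integrable_iff_bounded nn using meas by simp
  show ?thesis
  proof
    assume "integrable ?M (\<lambda>(x, y, z). h_lambda l1 l2 l3 x y z)"
    then have fin: "iter3 (R3 a b c :: (real^'n) \<times> _ \<Rightarrow> _) < \<infinity>" using int_iff by simp
    have "a > -1"
    proof (rule ccontr)
      assume "\<not> a > -1"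
      then have "iter3 (R3 a b c :: (real^'n) \<times> _ \<Rightarrow> _) = \<infinity>" using lower_inf[OF assms] by simp
      then show False using fin by simp
    qed
    moreover have "b > -1"
    proof (rule ccontr)
      assume "\<not> b > -1"
      then have "iter3 (R3 b a c :: (real^'n) \<times> _ \<Rightarrow> _) = \<infinity>" using lower_inf[OF assms] by simp
      then show False using fin iter3_sym_b[of a b c, where 'n='n] by simp
    qed
    moreover have "c > -1"
    proof (rule ccontr)
      assume "\<not> c > -1"
      then have "iter3 (R3 c a b :: (real^'n) \<times> _ \<Rightarrow> _) = \<infinity>" using lower_inf[OF assms] by simp
      then show False using fin iter3_sym_c[of a b c, where 'n='n] by simp
    qed
    ultimately show "Re l1 > -1 \<and> Re l2 > -1 \<and> Re l3 > -1" unfolding a_def b_def c_def by simp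
  next
    assume "Re l1 > -1 \<and> Re l2 > -1 \<and> Re l3 > -1"
    then have "iter3 (R3 a b c :: (real^'n) \<times> _ \<Rightarrow> _) < \<infinity>"
      unfolding a_def b_def c_def by (intro upper_fin[OF assms]) auto
    then show "integrable ?M (\<lambda>(x, y, z). h_lambda l1 l2 l3 x y z)" using int_iff by simp
  qed
qed

end
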